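(* Let $q$ be a prime power and use the setting of the context. Let $\mathcal Q\in\mathcal H$ be a hyperbolic quadric not containing the point $T$, and let $\mathcal R$ be one of its two reguli. Then no two distinct lines of $\mathcal R$ lie in the same $C$-orbit.
   Context: Points of ${\rm PG}(3,q)$ are $\langle(x_1,x_2,x_3,x_4)\rangle$; $\pi$ is the plane $x_4=0$ and $T=\langle(0,0,0,1)\rangle$. Let $\sigma\in{\rm GL}(3,q)$ be a Singer cycle (element of order $q^3-1$) and let $C$ be the group of projectivities induced by the matrices $\begin{pmatrix} A&0\\0&1\end{pmatrix}$, $A\in\langle\sigma\rangle$ (order $q^3-1$). The group $C$ induces on $\pi$ a Singer cyclic group $C_1$ of order $q^2+q+1$. Embedding $\pi$ in ${\rm PG}(2,q^3)$, $C_1$ fixes a unique triangle $\Delta$ with vertices outside ${\rm PG}(2,q)$; the circumscribed bundle $\mathcal B$ is the set of non-degenerate conics of $\pi$ whose extensions over ${\rm GF}(q^3)$ contain the vertices of $\Delta$. $\mathcal H$ is the set of hyperbolic quadrics of ${\rm PG}(3,q)$ meeting $\pi$ in a conic of $\mathcal B$. A regulus of a hyperbolic quadric is one of its two families of $q+1$ pairwise skew lines. *)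

theory Defs
  imports Main
begin

text \<open>Coordinates are indexed from 0: the paper's coordinates x1,x2,x3,x4 are
 indices 0,1,2,3.  A vector of length n is a function nat => 'a vanishing
 outside {..<n}; a matrix is a function nat => nat => 'a (only entries with
 indices < n are used).\<close>

type_synonym 'a vect = "nat \<Rightarrow> 'a"
type_synonym 'a matr = "nat \<Rightarrow> nat \<Rightarrow> 'a"

definition vecs :: "nat \<Rightarrow> ('a::zero) vect set" where
  "vecs n = {v. \<forall>i\<ge>n. v i = 0}"

definition zvec :: "('a::zero) vect" where
  "zvec = (\<lambda>_. 0)"

definition mat_mul_vec :: "nat \<Rightarrow> ('a::semiring_0) matr \<Rightarrow> 'a vect \<Rightarrow> 'a vect" where
  "mat_mul_vec n M v = (\<lambda>i. if i < n then (\<Sum>j<n. M i j * v j) else 0)"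

definition mat_mul :: "nat \<Rightarrow> ('a::semiring_0) matr \<Rightarrow> 'a matr \<Rightarrow> 'a matr" where
  "mat_mul n M N = (\<lambda>i j. if i < n \<and> j < n then (\<Sum>k<n. M i k * N k j) else 0)"

definition mat_id :: "nat \<Rightarrow> ('a::{zero,one}) matr" where
  "mat_id n = (\<lambda>i j. if i < n \<and> j = i then 1 else 0)"

definition mat_pow :: "nat \<Rightarrow> ('a::semiring_1) matr \<Rightarrow> nat \<Rightarrow> 'a matr" where
  "mat_pow n M k = ((mat_mul n M) ^^ k) (mat_id n)"

definition invertible_mat :: "nat \<Rightarrow> ('a::semiring_1) matr \<Rightarrow> bool" where
  "invertible_mat n M \<longleftrightarrow> (\<exists>N. mat_mul n M N = mat_id n \<and> mat_mul n N M = mat_id n)"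

definition singer_cycle :: "('a::{finite,field}) matr \<Rightarrow> bool" where
  "singer_cycle A \<longleftrightarrow> invertible_mat 3 A \<and>
     mat_pow 3 A (card (UNIV :: 'a set)^3 - 1) = mat_id 3 \<and>
     (\<forall>k. 0 < k \<and> k < card (UNIV :: 'a set)^3 - 1 \<longrightarrow> mat_pow 3 A k \<noteq> mat_id 3)"

definition blk :: "('a::{zero,one}) matr \<Rightarrow> 'a matr" where
  "blk A = (\<lambda>i j. if i < 3 \<and> j < 3 then A i j else if i = 3 \<and> j = 3 then 1 else 0)"

text \<open>Lines of PG(3,q): 2-dimensional subspaces of GF(q)^4.\<close>
definition span2 :: "('a::semiring_0) vect \<Rightarrow> 'a vect \<Rightarrow> 'a vect set" where
  "span2 u v = {(\<lambda>i. a * u i + b * v i) | a b. True}"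

definition lines4 :: "('a::field) vect set set" where
  "lines4 = {span2 u v | u v. u \<in> vecs 4 \<and> v \<in> vecs 4 \<and>
      (\<forall>a b. (\<lambda>i. a * u i + b * v i) = zvec \<longrightarrow> a = 0 \<and> b = 0)}"

definition same_C_orbit :: "('a::field) matr \<Rightarrow> 'a vect set \<Rightarrow> 'a vect set \<Rightarrow> bool" where
  "same_C_orbit A L1 L2 \<longleftrightarrow> (\<exists>k. L2 = mat_mul_vec 4 (blk (mat_pow 3 A k)) ` L1)"

definition qf :: "nat \<Rightarrow> ('a::comm_semiring_0) matr \<Rightarrow> 'a vect \<Rightarrow> 'a" where
  "qf n c v = (\<Sum>i<n. \<Sum>j\<in>{i..<n}. c i j * v i * v j)"

definition polar :: "nat \<Rightarrow> ('a::comm_ring) matr \<Rightarrow> 'a vect \<Rightarrow> 'a vect \<Rightarrow> 'a" where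
  "polar n c v w = qf n c (\<lambda>i. v i + w i) - qf n c v - qf n c w"

definition nondeg :: "nat \<Rightarrow> ('a::comm_ring) matr \<Rightarrow> bool" where
  "nondeg n c \<longleftrightarrow> (\<forall>v\<in>vecs n. v \<noteq> zvec \<longrightarrow> qf n c v = 0 \<longrightarrow>
      (\<exists>w\<in>vecs n. polar n c v w \<noteq> 0))"

definition hyperbolic :: "('a::field) matr \<Rightarrow> bool" where
  "hyperbolic c \<longleftrightarrow> (\<exists>M. invertible_mat 4 M \<and>
      (\<forall>x\<in>vecs 4. qf 4 c (mat_mul_vec 4 M x) = x 0 * x 1 + x 2 * x 3))"

text \<open>GF(q^3) as an extension of GF(q) via an embedding phi.\<close>
definition cubic_ext :: "('a::{finite,field} \<Rightarrow> 'b::{finite,field}) \<Rightarrow> bool" where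
  "cubic_ext \<phi> \<longleftrightarrow> inj \<phi> \<and> \<phi> 0 = 0 \<and> \<phi> 1 = 1 \<and>
     (\<forall>x y. \<phi> (x + y) = \<phi> x + \<phi> y) \<and> (\<forall>x y. \<phi> (x * y) = \<phi> x * \<phi> y) \<and>
     card (UNIV :: 'b set) = card (UNIV :: 'a set)^3"

text \<open>Vertices of the triangle Delta: points of PG(2,q^3) outside PG(2,q)
  fixed by the Singer group C_1 (i.e. fixed by its generator).\<close>
definition delta_vertices :: "('a::field \<Rightarrow> 'b::field) \<Rightarrow> 'a matr \<Rightarrow> 'b vect set" where
  "delta_vertices \<phi> A = {w \<in> vecs 3. w \<noteq> zvec \<and>
      (\<exists>l. mat_mul_vec 3 (\<lambda>i j. \<phi> (A i j)) w = (\<lambda>i. l * w i)) \<and>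
      \<not> (\<exists>v\<in>vecs 3. \<exists>t. w = (\<lambda>i. t * \<phi> (v i)))}"

definition in_bundle :: "('a::field \<Rightarrow> 'b::field) \<Rightarrow> 'a matr \<Rightarrow> 'a matr \<Rightarrow> bool" where
  "in_bundle \<phi> A c3 \<longleftrightarrow> nondeg 3 c3 \<and>
     (\<forall>w\<in>delta_vertices \<phi> A. qf 3 (\<lambda>i j. \<phi> (c3 i j)) w = 0)"

text \<open>The set H: hyperbolic quadrics meeting pi (x4 = 0) in a conic of B.
  The section with pi is the restriction of the form to the first 3 coordinates.\<close>
definition in_H :: "('a::field \<Rightarrow> 'b::field) \<Rightarrow> 'a matr \<Rightarrow> 'a matr \<Rightarrow> bool" where
  "in_H \<phi> A c \<longleftrightarrow> hyperbolic c \<and> in_bundle \<phi> A c"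

definition pointT :: "('a::{zero,one}) vect" where
  "pointT = (\<lambda>i. if i = 3 then 1 else 0)"

definition line_on :: "('a::field) matr \<Rightarrow> 'a vect set \<Rightarrow> bool" where
  "line_on c L \<longleftrightarrow> L \<in> lines4 \<and> (\<forall>v\<in>L. qf 4 c v = 0)" 

definition regulus :: "('a::field) matr \<Rightarrow> 'a vect set set \<Rightarrow> bool" where
  "regulus c R \<longleftrightarrow> (\<exists>L0. line_on c L0 \<and>
      R = {L. line_on c L \<and> (L = L0 \<or> L \<inter> L0 = {zvec})})"

end

theory Submission
  imports Defs "HOL-Computational_Algebra.Polynomial"
begin

lemma sum3: "(\<Sum>j<(3::nat). g j) = g 0 + g 1 + (g 2::'a::comm_monoid_add)"
  by (simp add: eval_nat_numeral ac_simps)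

lemma qf3_explicit: "qf 3 c x = c 0 0 * x 0 * x 0 + c 0 1 * x 0 * x 1 + c 0 2 * x 0 * x 2
   + c 1 1 * x 1 * x 1 + c 1 2 * x 1 * x 2 + c 2 2 * x 2 * x 2"
  by (simp add: qf_def eval_nat_numeral atLeastLessThanSuc ac_simps)

lemma qf4_explicit: "qf 4 c x = c 0 0 * x 0 * x 0 + c 0 1 * x 0 * x 1 + c 0 2 * x 0 * x 2 + c 0 3 * x 0 * x 3
   + c 1 1 * x 1 * x 1 + c 1 2 * x 1 * x 2 + c 1 3 * x 1 * x 3 + c 2 2 * x 2 * x 2 + c 2 3 * x 2 * x 3 + c 3 3 * x 3 * x 3"
  by (simp add: qf_def eval_nat_numeral atLeastLessThanSuc ac_simps)

definition pol :: "nat \<Rightarrow> ('a::comm_ring_1) matr \<Rightarrow> 'a vect \<Rightarrow> 'a vect \<Rightarrow> 'a" where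
  "pol n c x y = (\<Sum>i<n. \<Sum>j\<in>{i..<n}. c i j * (x i * y j + y i * x j))"

lemma qf_comb2: "qf n c (\<lambda>i. a * x i + b * y i) = a^2 * qf n c x + a * b * pol n c x y + b^2 * qf n c (y::('a::comm_ring_1) vect)"
proof -
  have "qf n c (\<lambda>i. a * x i + b * y i) = (\<Sum>i<n. \<Sum>j\<in>{i..<n}. a^2 * (c i j * x i * x j) + a * b * (c i j * (x i * y j + y i * x j)) + b^2 * (c i j * y i * y j))"
    unfolding qf_def by (intro sum.cong refl) (simp add: algebra_simps power2_eq_square)
  also have "\<dots> = a^2 * qf n c x + a * b * pol n c x y + b^2 * qf n c y"
    by (simp add: qf_def pol_def sum.distrib sum_distrib_left)
  finally show ?thesis .
qed

lemma qf_comb3: "qf n c (\<lambda>i. a * x i + b * y i + d * z i) = a^2 * qf n c x + b^2 * qf n c y + d^2 * qf n c z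
   + a * b * pol n c x y + a * d * pol n c x z + b * d * pol n c y (z::('a::comm_ring_1) vect)"
proof -
  have "qf n c (\<lambda>i. a * x i + b * y i + d * z i) = (\<Sum>i<n. \<Sum>j\<in>{i..<n}. a^2 * (c i j * x i * x j) + b^2 * (c i j * y i * y j) + d^2 * (c i j * z i * z j)
     + a * b * (c i j * (x i * y j + y i * x j)) + a * d * (c i j * (x i * z j + z i * x j)) + b * d * (c i j * (y i * z j + z i * y j)))"
    unfolding qf_def by (intro sum.cong refl) (simp add: algebra_simps power2_eq_square)
  also have "\<dots> = a^2 * qf n c x + b^2 * qf n c y + d^2 * qf n c z
   + a * b * pol n c x y + a * d * pol n c x z + b * d * pol n c y z"
    by (simp add: qf_def pol_def sum.distrib sum_distrib_left)
  finally show ?thesis .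
qed

lemma pol_comb: "pol n c x (\<lambda>i. a * y i + b * z i) = a * pol n c x y + b * pol n c x (z::('a::comm_ring_1) vect)"
proof -
  have "pol n c x (\<lambda>i. a * y i + b * z i) = (\<Sum>i<n. \<Sum>j\<in>{i..<n}. a * (c i j * (x i * y j + y i * x j)) + b * (c i j * (x i * z j + z i * x j)))"
    unfolding pol_def by (intro sum.cong refl) (simp add: algebra_simps)
  also have "\<dots> = a * pol n c x y + b * pol n c x z"
    by (simp add: pol_def sum.distrib sum_distrib_left)
  finally show ?thesis .
qed

lemma pol_sym: "pol n c x y = pol n c y (x::('a::comm_ring_1) vect)"
  unfolding pol_def by (intro sum.cong refl) (simp add: algebra_simps)

lemma pol_comb1: "pol n c (\<lambda>i. a * y i + b * z i) x = a * pol n c y x + b * pol n c z (x::('a::comm_ring_1) vect)"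
  using pol_comb[of n c x a y b z] by (simp add: pol_sym)

lemma pol_self: "pol n c x x = 2 * qf n c (x::('a::comm_ring_1) vect)"
  unfolding pol_def qf_def by (simp add: sum_distrib_left algebra_simps)

lemma qf_smult: "qf n c (\<lambda>i. a * x i) = a^2 * qf n c (x::('a::comm_ring_1) vect)"
  using qf_comb2[of n c a x 0 x] by simp

lemma polar_pol: "polar n c v w = pol n c v (w::('a::comm_ring_1) vect)"
  using qf_comb2[of n c 1 v 1 w] by (simp add: polar_def)

definition ext :: "('a::zero) vect \<Rightarrow> 'a \<Rightarrow> 'a vect" where "ext x t = x(3 := t)"

definition lin :: "('a::comm_ring_1) matr \<Rightarrow> 'a vect \<Rightarrow> 'a" where
  "lin c x = c 0 3 * x 0 + c 1 3 * x 1 + c 2 3 * x 2"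

lemma vecsD: "x \<in> vecs n \<Longrightarrow> n \<le> i \<Longrightarrow> x i = 0"
  by (simp add: vecs_def)

lemma vecs_comb: "x \<in> vecs n \<Longrightarrow> y \<in> vecs n \<Longrightarrow> (\<lambda>i. a * x i + b * (y i::'a::semiring_0)) \<in> vecs n"
  by (simp add: vecs_def)

lemma vecs_smult: "x \<in> vecs n \<Longrightarrow> (\<lambda>i. a * (x i::'a::semiring_0)) \<in> vecs n"
  by (simp add: vecs_def)

lemma ext_vecs: "x \<in> vecs 3 \<Longrightarrow> ext x t \<in> vecs 4"
  by (simp add: vecs_def ext_def)

lemma ext_3[simp]: "ext x t 3 = t" by (simp add: ext_def)
lemma ext_lt3[simp]: "i < 3 \<Longrightarrow> ext x t i = x i" by (simp add: ext_def)

lemma vecs4_ext: "y \<in> vecs 4 \<Longrightarrow> y = ext (y(3:=0)) (y 3) \<and> y(3:=0) \<in> vecs 3"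
  by (auto simp: vecs_def ext_def)

lemma vecs4_3: "y \<in> vecs 4 \<Longrightarrow> y 3 = 0 \<Longrightarrow> y \<in> vecs 3"
  unfolding vecs_def proof (intro CollectI allI impI)
  fix i assume "y \<in> {v. \<forall>i\<ge>4. v i = 0}" "y 3 = 0" "3 \<le> (i::nat)"
  moreover have "i = 3 \<or> 4 \<le> i" using \<open>3 \<le> i\<close> by arith
  ultimately show "y i = 0" by auto
qed

lemma ext0: "x \<in> vecs 3 \<Longrightarrow> ext x 0 = x"
  by (auto simp: ext_def vecs_def fun_eq_iff)

lemma ext_comb: "(\<lambda>i. a * ext x s i + b * ext y t i) = ext (\<lambda>i. a * x i + b * y i) (a * s + b * (t::'a::semiring_0))"
  by (simp add: ext_def fun_eq_iff)

lemma ext_inj: "x \<in> vecs 3 \<Longrightarrow> y \<in> vecs 3 \<Longrightarrow> ext x s = ext y t \<longleftrightarrow> x = y \<and> s = t"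
  by (auto simp: ext_def fun_eq_iff vecs_def)

lemma qf_ext: "x \<in> vecs 3 \<Longrightarrow> qf 4 c (ext x t) = qf 3 c x + t * lin c x + t^2 * (c 3 3::'a::comm_ring_1)"
  by (simp add: qf4_explicit qf3_explicit lin_def vecs_def ext_def algebra_simps power2_eq_square)

lemma pol3_explicit: "pol 3 c x y = c 0 0 * (x 0 * y 0 + y 0 * x 0) + c 0 1 * (x 0 * y 1 + y 0 * x 1) + c 0 2 * (x 0 * y 2 + y 0 * x 2)
   + c 1 1 * (x 1 * y 1 + y 1 * x 1) + c 1 2 * (x 1 * y 2 + y 1 * x 2) + c 2 2 * (x 2 * y 2 + y 2 * x 2)"
  by (simp add: pol_def eval_nat_numeral atLeastLessThanSuc ac_simps)

lemma pol4_explicit: "pol 4 c x y = c 0 0 * (x 0 * y 0 + y 0 * x 0) + c 0 1 * (x 0 * y 1 + y 0 * x 1) + c 0 2 * (x 0 * y 2 + y 0 * x 2) + c 0 3 * (x 0 * y 3 + y 0 * x 3)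
   + c 1 1 * (x 1 * y 1 + y 1 * x 1) + c 1 2 * (x 1 * y 2 + y 1 * x 2) + c 1 3 * (x 1 * y 3 + y 1 * x 3) + c 2 2 * (x 2 * y 2 + y 2 * x 2) + c 2 3 * (x 2 * y 3 + y 2 * x 3)
   + c 3 3 * (x 3 * y 3 + y 3 * x 3)"
  by (simp add: pol_def eval_nat_numeral atLeastLessThanSuc ac_simps)

lemma pol_ext: "x \<in> vecs 3 \<Longrightarrow> y \<in> vecs 3 \<Longrightarrow> pol 4 c (ext x s) (ext y t) = pol 3 c x y + s * lin c y + t * lin c x + 2 * s * t * (c 3 3::'a::comm_ring_1)"
  by (simp add: pol4_explicit pol3_explicit lin_def vecs_def ext_def algebra_simps)

lemma lin_comb: "lin c (\<lambda>i. a * x i + b * y i) = a * lin c x + b * lin c (y::('a::comm_ring_1) vect)"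
  by (simp add: lin_def algebra_simps)

lemma mmv_explicit: "mat_mul_vec 3 M x = (\<lambda>i. if i < 3 then M i 0 * x 0 + M i 1 * x 1 + M i 2 * x 2 else 0)"
  unfolding mat_mul_vec_def by (rule ext, subst sum3, simp)

lemma mmv_vecs: "mat_mul_vec n M x \<in> vecs n"
  by (simp add: mat_mul_vec_def vecs_def)

lemma mmv_comb: "mat_mul_vec n M (\<lambda>i. (a::'a::comm_ring_1) * x i + b * y i) = (\<lambda>i. a * mat_mul_vec n M x i + b * mat_mul_vec n M y (i::nat)) "
proof (rule ext)
  fix i
  have "(\<Sum>j<n. M i j * (a * x j + b * y j)) = (\<Sum>j<n. a * (M i j * x j) + b * (M i j * y j))"
    by (rule sum.cong) (simp_all add: algebra_simps)
  then show "mat_mul_vec n M (\<lambda>i. a * x i + b * y i) i = a * mat_mul_vec n M x i + b * mat_mul_vec n M y i"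
    by (simp add: mat_mul_vec_def sum.distrib sum_distrib_left)
qed

lemma mmv_smult: "mat_mul_vec n M (\<lambda>i. (a::'a::comm_ring_1) * x i) = (\<lambda>i. a * mat_mul_vec n M x (i::nat))"
  using mmv_comb[of n M a x 0 x] by simp

lemma mmv_blk: "x \<in> vecs 3 \<Longrightarrow> mat_mul_vec 4 (blk B) (ext x t) = ext (mat_mul_vec 3 B x) (t::'a::comm_ring_1)"
  by (auto simp: mat_mul_vec_def blk_def ext_def fun_eq_iff eval_nat_numeral vecs_def)

definition det3 :: "('a::comm_ring_1) vect \<Rightarrow> 'a vect \<Rightarrow> 'a vect \<Rightarrow> 'a" where
  "det3 x y z = x 0 * (y 1 * z 2 - y 2 * z 1) - x 1 * (y 0 * z 2 - y 2 * z 0) + x 2 * (y 0 * z 1 - y 1 * z 0)"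

lemma vecs3_eqI: "x \<in> vecs 3 \<Longrightarrow> y \<in> vecs 3 \<Longrightarrow> x 0 = y 0 \<Longrightarrow> x 1 = y 1 \<Longrightarrow> x 2 = y 2 \<Longrightarrow> x = y"
  apply (rule ext)
  subgoal for i
    by (cases "i < 3") (auto simp: vecs_def eval_nat_numeral less_Suc_eq)
  done

lemma cramer:
  assumes d: "det3 x y z \<noteq> (0::'a::field)" and v: "w \<in> vecs 3" "x \<in> vecs 3" "y \<in> vecs 3" "z \<in> vecs 3"
  shows "w = (\<lambda>i. (det3 w y z / det3 x y z) * x i + (det3 x w z / det3 x y z) * y i + (det3 x y w / det3 x y z) * z i)"
proof (rule vecs3_eqI)
  show "(\<lambda>i. det3 w y z / det3 x y z * x i + det3 x w z / det3 x y z * y i + det3 x y w / det3 x y z * z i) \<in> vecs 3"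
    using v by (simp add: vecs_def)
  show "w \<in> vecs 3" by fact
  show "w 0 = det3 w y z / det3 x y z * x 0 + det3 x w z / det3 x y z * y 0 + det3 x y w / det3 x y z * z 0"
    using d by (simp add: field_simps) (simp add: det3_def algebra_simps)
  show "w 1 = det3 w y z / det3 x y z * x 1 + det3 x w z / det3 x y z * y 1 + det3 x y w / det3 x y z * z 1"
    using d by (simp add: field_simps) (simp add: det3_def algebra_simps)
  show "w 2 = det3 w y z / det3 x y z * x 2 + det3 x w z / det3 x y z * y 2 + det3 x y w / det3 x y z * z 2"
    using d by (simp add: field_simps) (simp add: det3_def algebra_simps)
qed


lemma det3_zero_dep:
  fixes x y z :: "('a::field) vect"
  assumes d: "det3 x y z = 0" and v: "x \<in> vecs 3" "y \<in> vecs 3" "z \<in> vecs 3"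
  shows "\<exists>a b c. (a \<noteq> 0 \<or> b \<noteq> 0 \<or> c \<noteq> 0) \<and> (\<lambda>i. a * x i + b * y i + c * z i) = zvec"
proof -
  have key: "(\<lambda>i. a * x i + b * y i + c * z i) = zvec"
    if "a * x 0 + b * y 0 + c * z 0 = 0" "a * x 1 + b * y 1 + c * z 1 = 0" "a * x 2 + b * y 2 + c * z 2 = 0" for a b c
    by (rule vecs3_eqI) (use that v in \<open>auto simp: vecs_def zvec_def\<close>)
  have W: "\<exists>a b c. (a \<noteq> 0 \<or> b \<noteq> 0 \<or> c \<noteq> 0) \<and> (\<lambda>i. a * x i + b * y i + c * z i) = zvec"
    if "a \<noteq> 0 \<or> b \<noteq> 0 \<or> c \<noteq> 0" "a * x 0 + b * y 0 + c * z 0 = 0" "a * x 1 + b * y 1 + c * z 1 = 0" "a * x 2 + b * y 2 + c * z 2 = 0" for a b c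
    using that key by blast
  have dd: "x 0 * (y 1 * z 2 - y 2 * z 1) - x 1 * (y 0 * z 2 - y 2 * z 0) + x 2 * (y 0 * z 1 - y 1 * z 0) = 0"
    using d by (simp add: det3_def)
  show ?thesis
  proof (cases "y 0 * z 1 - z 0 * y 1 \<noteq> 0 \<or> z 0 * x 1 - x 0 * z 1 \<noteq> 0 \<or> x 0 * y 1 - y 0 * x 1 \<noteq> 0")
    case True
    show ?thesis
      apply (rule W[OF True])
      subgoal by algebra
      subgoal by algebra
      subgoal using dd by algebra
      done
  next
    case F1: False
    show ?thesis
    proof (cases "y 0 * z 2 - z 0 * y 2 \<noteq> 0 \<or> z 0 * x 2 - x 0 * z 2 \<noteq> 0 \<or> x 0 * y 2 - y 0 * x 2 \<noteq> 0")
      case True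
      show ?thesis
        by (rule W[OF True]; (algebra | use dd in algebra))
    next
      case F2: False
      show ?thesis
      proof (cases "y 1 * z 2 - z 1 * y 2 \<noteq> 0 \<or> z 1 * x 2 - x 1 * z 2 \<noteq> 0 \<or> x 1 * y 2 - y 1 * x 2 \<noteq> 0")
        case True
        show ?thesis
          by (rule W[OF True]; (algebra | use dd in algebra))
      next
        case F3: False
        have m: "y 0 * z 1 = z 0 * y 1" "z 0 * x 1 = x 0 * z 1" "x 0 * y 1 = y 0 * x 1"
          "y 0 * z 2 = z 0 * y 2" "z 0 * x 2 = x 0 * z 2" "x 0 * y 2 = y 0 * x 2"
          "y 1 * z 2 = z 1 * y 2" "z 1 * x 2 = x 1 * z 2" "x 1 * y 2 = y 1 * x 2"
          using F1 F2 F3 by auto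
        consider (r0) "x 0 \<noteq> 0 \<or> y 0 \<noteq> 0 \<or> z 0 \<noteq> 0" | (r1) "x 1 \<noteq> 0 \<or> y 1 \<noteq> 0 \<or> z 1 \<noteq> 0"
          | (r2) "x 2 \<noteq> 0 \<or> y 2 \<noteq> 0 \<or> z 2 \<noteq> 0" | (zz) "x 0 = 0 \<and> y 0 = 0 \<and> z 0 = 0 \<and> x 1 = 0 \<and> y 1 = 0 \<and> z 1 = 0 \<and> x 2 = 0 \<and> y 2 = 0 \<and> z 2 = 0"
          by blast
        then show ?thesis
        proof cases
          case r0
          show ?thesis
          proof (cases "y 0 \<noteq> 0 \<or> z 0 \<noteq> 0")
            case True
            have hh: "0 \<noteq> 0 \<or> - z 0 \<noteq> 0 \<or> y 0 \<noteq> 0" using True by auto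
            show ?thesis by (rule W[OF hh]; (algebra | use m in algebra))
          next
            case False
            have hh: "z 0 \<noteq> 0 \<or> 0 \<noteq> 0 \<or> - x 0 \<noteq> 0" using r0 False by auto
            show ?thesis by (rule W[OF hh]; (algebra | use m in algebra))
          qed
        next
          case r1
          show ?thesis
          proof (cases "y 1 \<noteq> 0 \<or> z 1 \<noteq> 0")
            case True
            have hh: "0 \<noteq> 0 \<or> - z 1 \<noteq> 0 \<or> y 1 \<noteq> 0" using True by auto
            show ?thesis by (rule W[OF hh]; (algebra | use m in algebra))
          next
            case False
            have hh: "z 1 \<noteq> 0 \<or> 0 \<noteq> 0 \<or> - x 1 \<noteq> 0" using r1 False by auto
            show ?thesis by (rule W[OF hh]; (algebra | use m in algebra))
          qed
        next
          case r2
          show ?thesis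
          proof (cases "y 2 \<noteq> 0 \<or> z 2 \<noteq> 0")
            case True
            have hh: "0 \<noteq> 0 \<or> - z 2 \<noteq> 0 \<or> y 2 \<noteq> 0" using True by auto
            show ?thesis by (rule W[OF hh]; (algebra | use m in algebra))
          next
            case False
            have hh: "z 2 \<noteq> 0 \<or> 0 \<noteq> 0 \<or> - x 2 \<noteq> 0" using r2 False by auto
            show ?thesis by (rule W[OF hh]; (algebra | use m in algebra))
          qed
        next
          case zz
          have hh: "(1::'a) \<noteq> 0 \<or> (0::'a) \<noteq> 0 \<or> (0::'a) \<noteq> 0" by simp
          show ?thesis by (rule W[OF hh]; use zz in simp)
        qed
      qed
    qed
  qed
qed

lemma mmv_mat_mul: "mat_mul_vec n (mat_mul n M P) x = mat_mul_vec n M (mat_mul_vec n P (x::('a::comm_ring_1) vect))"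
proof (rule ext)
  fix i
  show "mat_mul_vec n (mat_mul n M P) x i = mat_mul_vec n M (mat_mul_vec n P x) i"
  proof (cases "i < n")
    case True
    have "(\<Sum>j<n. (\<Sum>k<n. M i k * P k j) * x j) = (\<Sum>j<n. \<Sum>k<n. M i k * (P k j * x j))"
      by (simp add: sum_distrib_right mult.assoc)
    also have "\<dots> = (\<Sum>k<n. \<Sum>j<n. M i k * (P k j * x j))" by (rule sum.swap)
    also have "\<dots> = (\<Sum>k<n. M i k * (\<Sum>j<n. P k j * x j))" by (simp add: sum_distrib_left)
    finally show ?thesis using True by (simp add: mat_mul_vec_def mat_mul_def)
  next
    case False then show ?thesis by (simp add: mat_mul_vec_def)
  qed
qed

lemma mmv_id: "x \<in> vecs n \<Longrightarrow> mat_mul_vec n (mat_id n) x = (x::('a::comm_ring_1) vect)"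
proof (rule ext)
  fix i assume x: "x \<in> vecs n"
  show "mat_mul_vec n (mat_id n) x i = x i"
  proof (cases "i < n")
    case True
    have "(\<Sum>j<n. (if i < n \<and> j = i then 1 else 0) * x j) = (\<Sum>j<n. if j = i then x j else 0)"
      by (rule sum.cong) (use True in auto)
    also have "\<dots> = x i" using True by simp
    finally show ?thesis using True by (simp add: mat_mul_vec_def mat_id_def)
  next
    case False then show ?thesis using x by (simp add: mat_mul_vec_def vecs_def)
  qed
qed

lemma mat_pow_0: "mat_pow n M 0 = mat_id n" by (simp add: mat_pow_def)
lemma mat_pow_Suc: "mat_pow n M (Suc k) = mat_mul n M (mat_pow n M k)" by (simp add: mat_pow_def)

lemma mmv_pow_Suc: "mat_mul_vec n (mat_pow n M (Suc k)) x = mat_mul_vec n M (mat_mul_vec n (mat_pow n M k) (x::('a::comm_ring_1) vect))"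
  by (simp add: mat_pow_Suc mmv_mat_mul)

lemma mmv_pow_add: "x \<in> vecs n \<Longrightarrow> mat_mul_vec n (mat_pow n M (a + b)) x = mat_mul_vec n (mat_pow n M a) (mat_mul_vec n (mat_pow n M b) (x::('a::comm_ring_1) vect))"
proof (induction a)
  case 0 then show ?case by (simp add: mat_pow_0 mmv_id mmv_vecs)
next
  case (Suc a) then show ?case by (simp add: mmv_pow_Suc)
qed

definition supp :: "nat \<Rightarrow> ('a::zero) matr \<Rightarrow> bool" where
  "supp n M \<longleftrightarrow> (\<forall>i j. n \<le> i \<or> n \<le> j \<longrightarrow> M i j = 0)"

lemma supp_mat_mul: "supp n (mat_mul n M P)" by (auto simp: supp_def mat_mul_def)
lemma supp_mat_id: "supp n (mat_id n)" by (auto simp: supp_def mat_id_def)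
lemma supp_mat_pow: "supp n (mat_pow n M k)"
  by (cases k) (simp_all add: mat_pow_0 mat_pow_Suc supp_mat_mul supp_mat_id)

definition uvec :: "nat \<Rightarrow> ('a::{zero,one}) vect" where "uvec j = (\<lambda>k. if k = j then 1 else 0)"

lemma uvec_vecs: "j < n \<Longrightarrow> uvec j \<in> vecs n" by (auto simp: uvec_def vecs_def)
lemma uvec_nz: "uvec j \<noteq> (zvec::('a::zero_neq_one) vect)" by (auto simp: uvec_def zvec_def fun_eq_iff)

lemma mmv_uvec: "i < n \<Longrightarrow> j < n \<Longrightarrow> mat_mul_vec n M (uvec j) i = (M i j::'a::comm_ring_1)"
proof -
  assume a: "i < n" "j < n"
  have "(\<Sum>k<n. M i k * (if k = j then 1 else 0)) = (\<Sum>k<n. if k = j then M i k else 0)"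
    by (rule sum.cong) auto
  then show ?thesis using a by (simp add: mat_mul_vec_def uvec_def)
qed

lemma supp_eq:
  assumes "supp n M" "supp n P" "\<forall>x\<in>vecs n. mat_mul_vec n M x = mat_mul_vec n P (x::('a::comm_ring_1) vect)"
  shows "M = P"
proof (intro ext)
  fix i j
  show "M i j = P i j"
  proof (cases "i < n \<and> j < n")
    case True
    then have "mat_mul_vec n M (uvec j) i = mat_mul_vec n P (uvec j) i" using assms(3) uvec_vecs by metis
    then show ?thesis using True by (simp add: mmv_uvec)
  next
    case False then show ?thesis using assms(1,2) by (auto simp: supp_def not_less)
  qed
qed


lemma ce_add: "cubic_ext \<phi> \<Longrightarrow> \<phi> (x + y) = \<phi> x + \<phi> y" by (simp add: cubic_ext_def)
lemma ce_mult: "cubic_ext \<phi> \<Longrightarrow> \<phi> (x * y) = \<phi> x * \<phi> y" by (simp add: cubic_ext_def)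
lemma ce_0: "cubic_ext \<phi> \<Longrightarrow> \<phi> 0 = 0" by (simp add: cubic_ext_def)
lemma ce_1: "cubic_ext \<phi> \<Longrightarrow> \<phi> 1 = 1" by (simp add: cubic_ext_def)
lemma ce_inj: "cubic_ext \<phi> \<Longrightarrow> \<phi> x = \<phi> y \<longleftrightarrow> x = y" by (auto simp: cubic_ext_def inj_def)

lemma ce_neg: "cubic_ext \<phi> \<Longrightarrow> \<phi> (- x) = - \<phi> x"
proof -
  assume c: "cubic_ext \<phi>"
  have "\<phi> (- x) + \<phi> x = 0" using ce_add[OF c, of "-x" x] ce_0[OF c] by simp
  then show ?thesis by (simp add: eq_neg_iff_add_eq_0)
qed

lemma ce_diff: "cubic_ext \<phi> \<Longrightarrow> \<phi> (x - y) = \<phi> x - \<phi> y"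
  using ce_add[of \<phi> x "-y"] ce_neg[of \<phi> y] by simp

lemma ce_pow: "cubic_ext \<phi> \<Longrightarrow> \<phi> (x ^ n) = \<phi> x ^ n"
  by (induction n) (simp_all add: ce_1 ce_mult)

lemma ce_inverse: "cubic_ext \<phi> \<Longrightarrow> \<phi> (inverse x) = inverse (\<phi> x)"
proof (cases "x = 0")
  case True then show "cubic_ext \<phi> \<Longrightarrow> ?thesis" by (simp add: ce_0)
next
  case False
  assume c: "cubic_ext \<phi>"
  have "\<phi> x * \<phi> (inverse x) = 1" using ce_mult[OF c, of x "inverse x"] False ce_1[OF c] by simp
  then show ?thesis by (metis inverse_unique)
qed

lemma ce_divide: "cubic_ext \<phi> \<Longrightarrow> \<phi> (x / y) = \<phi> x / \<phi> y"
  by (simp add: divide_inverse ce_mult ce_inverse)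

lemma ce_sum: "cubic_ext \<phi> \<Longrightarrow> \<phi> (sum f S) = (\<Sum>i\<in>S. \<phi> (f i))"
  by (induction S rule: infinite_finite_induct) (simp_all add: ce_0 ce_add)

lemma ce_mat_mul: "cubic_ext \<phi> \<Longrightarrow> (\<lambda>i j. \<phi> (mat_mul n M P i j)) = mat_mul n (\<lambda>i j. \<phi> (M i j)) (\<lambda>i j. \<phi> (P i j))"
  by (auto simp: mat_mul_def fun_eq_iff ce_sum ce_mult ce_0)

lemma ce_mat_id: "cubic_ext \<phi> \<Longrightarrow> (\<lambda>i j. \<phi> (mat_id n i j)) = mat_id n"
  by (auto simp: mat_id_def fun_eq_iff ce_0 ce_1)

lemma ce_mat_pow: "cubic_ext \<phi> \<Longrightarrow> (\<lambda>i j. \<phi> (mat_pow n M k i j)) = mat_pow n (\<lambda>i j. \<phi> (M i j)) k"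
  by (induction k) (simp_all add: mat_pow_0 mat_pow_Suc ce_mat_id ce_mat_mul)

lemma ce_mmv: "cubic_ext \<phi> \<Longrightarrow> mat_mul_vec n (\<lambda>i j. \<phi> (M i j)) (\<lambda>i. \<phi> (x i)) = (\<lambda>i. \<phi> (mat_mul_vec n M x i))"
  by (auto simp: mat_mul_vec_def fun_eq_iff ce_sum ce_mult ce_0)

lemma ce_vecs: "cubic_ext \<phi> \<Longrightarrow> x \<in> vecs n \<Longrightarrow> (\<lambda>i. \<phi> (x i)) \<in> vecs n"
  by (simp add: vecs_def ce_0)

lemma ce_qf: "cubic_ext \<phi> \<Longrightarrow> \<phi> (qf n c x) = qf n (\<lambda>i j. \<phi> (c i j)) (\<lambda>i. \<phi> (x i))"
  by (simp add: qf_def ce_sum ce_mult)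

lemma ce_pol: "cubic_ext \<phi> \<Longrightarrow> \<phi> (pol n c x y) = pol n (\<lambda>i j. \<phi> (c i j)) (\<lambda>i. \<phi> (x i)) (\<lambda>i. \<phi> (y i))"
  by (simp add: pol_def ce_sum ce_mult ce_add)

lemma ce_comb: "cubic_ext \<phi> \<Longrightarrow> (\<lambda>i. \<phi> (a * x i + b * y i)) = (\<lambda>i. \<phi> a * \<phi> (x i) + \<phi> b * \<phi> (y i))"
  by (simp add: ce_add ce_mult)

lemma mmv_comb3: "mat_mul_vec n M (\<lambda>i. (a::'a::comm_ring_1) * x i + b * y i + d * z i) = (\<lambda>i. a * mat_mul_vec n M x i + b * mat_mul_vec n M y i + d * mat_mul_vec n M z i)"
proof -
  have "(\<lambda>i. a * x i + b * y i + d * z i) = (\<lambda>i. 1 * (\<lambda>i. a * x i + b * y i) i + d * z i)" by simp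
  then show ?thesis by (simp only: mmv_comb) simp
qed

lemma mmv_matcomb: "mat_mul_vec n (\<lambda>i j. a * M i j + b * P i j + d * Q i j) x = (\<lambda>i. a * mat_mul_vec n M x i + b * mat_mul_vec n P x i + d * mat_mul_vec n Q (x::('a::comm_ring_1) vect) i)"
  by (auto simp: mat_mul_vec_def fun_eq_iff sum.distrib sum_distrib_left algebra_simps)

lemma card_ge2: "2 \<le> card (UNIV::('a::{finite,field}) set)"
proof -
  have "{0::'a, 1} \<subseteq> UNIV" by simp
  then have "card {0::'a, 1} \<le> card (UNIV::'a set)" by (rule card_mono[OF finite_UNIV])
  then show ?thesis by simp
qed

locale singer =
  fixes A :: "('a::{finite,field}) matr"
  assumes sc: "singer_cycle A"
begin

definition q where "q = card (UNIV::'a set)"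
definition N where "N = q^3 - 1"

lemma q2: "2 \<le> q" by (simp add: q_def card_ge2)

lemma N_ge: "7 \<le> N"
proof -
  have "2^3 \<le> q^3" using q2 by (rule power_mono) simp
  then show ?thesis by (simp add: N_def)
qed

lemma Suc_N: "Suc N = q^3"
proof -
  have "1 \<le> q^3" using q2 by simp
  then show ?thesis by (simp add: N_def)
qed

abbreviation ap :: "nat \<Rightarrow> 'a vect \<Rightarrow> 'a vect" where "ap k x \<equiv> mat_mul_vec 3 (mat_pow 3 A k) x"
abbreviation am :: "'a vect \<Rightarrow> 'a vect" where "am x \<equiv> mat_mul_vec 3 A x"

lemma ap_0: "x \<in> vecs 3 \<Longrightarrow> ap 0 x = x" by (simp add: mat_pow_0 mmv_id)
lemma ap_Suc: "ap (Suc k) x = am (ap k x)" by (simp add: mmv_pow_Suc)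
lemma ap_add: "x \<in> vecs 3 \<Longrightarrow> ap (a + b) x = ap a (ap b x)" by (rule mmv_pow_add)
lemma ap_vecs: "ap k x \<in> vecs 3" by (rule mmv_vecs)

lemma AN: "mat_pow 3 A N = mat_id 3" using sc by (simp add: singer_cycle_def N_def q_def)
lemma ap_N: "x \<in> vecs 3 \<Longrightarrow> ap N x = x" by (simp add: AN mmv_id)

lemma ap_Nt: "x \<in> vecs 3 \<Longrightarrow> ap (N * t) x = x"
proof (induction t)
  case 0 then show ?case by (simp add: ap_0)
next
  case (Suc t)
  have "ap (N * Suc t) x = ap N (ap (N * t) x)" using Suc.prems by (simp add: ap_add[symmetric] add.commute)
  then show ?case using Suc by (simp add: ap_N)
qed

lemma ap_inj: "x \<in> vecs 3 \<Longrightarrow> y \<in> vecs 3 \<Longrightarrow> ap k x = ap k y \<Longrightarrow> x = y"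
proof -
  assume x: "x \<in> vecs 3" and y: "y \<in> vecs 3" and e: "ap k x = ap k y"
  have k: "k \<le> N * k" using N_ge by simp
  have "x = ap (N * k - k + k) x" using k ap_Nt[OF x] by simp
  also have "\<dots> = ap (N * k - k) (ap k x)" using x by (rule ap_add)
  also have "\<dots> = ap (N * k - k) (ap k y)" using e by simp
  also have "\<dots> = ap (N * k - k + k) y" using y by (rule ap_add[symmetric])
  also have "\<dots> = y" using k ap_Nt[OF y] by simp
  finally show ?thesis .
qed

lemma ap_nz: "x \<in> vecs 3 \<Longrightarrow> x \<noteq> zvec \<Longrightarrow> ap k x \<noteq> zvec"
proof
  assume x: "x \<in> vecs 3" "x \<noteq> zvec" and e: "ap k x = zvec"
  have "ap k zvec = zvec" by (simp add: mat_mul_vec_def zvec_def fun_eq_iff)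
  then have "x = zvec" using ap_inj[OF x(1), of zvec k] e by (simp add: vecs_def zvec_def)
  then show False using x by simp
qed

definition e1 where "e1 = A 0 0 + A 1 1 + A 2 2"
definition e2 where "e2 = A 0 0 * A 1 1 - A 0 1 * A 1 0 + A 0 0 * A 2 2 - A 0 2 * A 2 0 + A 1 1 * A 2 2 - A 1 2 * A 2 1"
definition e3 where "e3 = A 0 0 * (A 1 1 * A 2 2 - A 1 2 * A 2 1) - A 0 1 * (A 1 0 * A 2 2 - A 1 2 * A 2 0) + A 0 2 * (A 1 0 * A 2 1 - A 1 1 * A 2 0)"

lemma CH: "x \<in> vecs 3 \<Longrightarrow> am (am (am x)) = (\<lambda>i. e1 * am (am x) i - e2 * am x i + e3 * x i)"
proof (rule vecs3_eqI)
  assume x: "x \<in> vecs 3"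
  show "am (am (am x)) \<in> vecs 3" by (rule mmv_vecs)
  show "(\<lambda>i. e1 * am (am x) i - e2 * am x i + e3 * x i) \<in> vecs 3"
    using x mmv_vecs[of 3 A x] mmv_vecs[of 3 A "am x"] by (simp add: vecs_def)
  show "am (am (am x)) 0 = e1 * am (am x) 0 - e2 * am x 0 + e3 * x 0"
    by (simp add: mmv_explicit e1_def e2_def e3_def) algebra
  show "am (am (am x)) 1 = e1 * am (am x) 1 - e2 * am x 1 + e3 * x 1"
    by (simp add: mmv_explicit e1_def e2_def e3_def) algebra
  show "am (am (am x)) 2 = e1 * am (am x) 2 - e2 * am x 2 + e3 * x 2"
    by (simp add: mmv_explicit e1_def e2_def e3_def) algebra
qed


definition Rstep :: "'a \<times> 'a \<times> 'a \<Rightarrow> 'a \<times> 'a \<times> 'a" where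
  "Rstep r = (snd (snd r) * e3, fst r - snd (snd r) * e2, fst (snd r) + snd (snd r) * e1)"
definition R :: "nat \<Rightarrow> 'a \<times> 'a \<times> 'a" where "R k = (Rstep ^^ k) (1, 0, 0)"

lemma R_0: "R 0 = (1, 0, 0)" by (simp add: R_def)
lemma R_Suc: "R (Suc k) = Rstep (R k)" by (simp add: R_def)

definition Lc :: "'a \<times> 'a \<times> 'a \<Rightarrow> 'a vect \<Rightarrow> 'a vect" where
  "Lc c x = (\<lambda>i. fst c * x i + fst (snd c) * am x i + snd (snd c) * am (am x) i)"

lemma Lc_vecs: "x \<in> vecs 3 \<Longrightarrow> Lc c x \<in> vecs 3"
  using mmv_vecs[of 3 A x] mmv_vecs[of 3 A "am x"] by (simp add: Lc_def vecs_def)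

lemma ap_Lc: "x \<in> vecs 3 \<Longrightarrow> ap k x = Lc (R k) x"
proof (induction k)
  case 0 then show ?case by (simp add: ap_0 R_0 Lc_def)
next
  case (Suc k)
  obtain r0 r1 r2 where r: "R k = (r0, r1, r2)" by (cases "R k") auto
  have "ap (Suc k) x = am (Lc (R k) x)" using Suc by (simp add: ap_Suc)
  also have "\<dots> = (\<lambda>i. r0 * am x i + r1 * am (am x) i + r2 * am (am (am x)) i)"
    by (simp add: Lc_def r mmv_comb3)
  also have "\<dots> = Lc (R (Suc k)) x"
    by (simp add: CH[OF Suc.prems] R_Suc Rstep_def r Lc_def fun_eq_iff algebra_simps)
  finally show ?case .
qed

definition Mt :: "'a \<times> 'a \<times> 'a \<Rightarrow> 'a matr" where
  "Mt c = (\<lambda>i j. fst c * mat_id 3 i j + fst (snd c) * mat_pow 3 A 1 i j + snd (snd c) * mat_pow 3 A 2 i j)"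

lemma supp_Mt: "supp 3 (Mt c)"
  using supp_mat_id[of 3] supp_mat_pow[of 3 A 1] supp_mat_pow[of 3 A 2] unfolding supp_def Mt_def by auto

lemma ap1: "x \<in> vecs 3 \<Longrightarrow> ap (Suc 0) x = am x" by (simp add: ap_Suc[of 0] ap_0)
lemma ap2: "x \<in> vecs 3 \<Longrightarrow> ap 2 x = am (am x)"
  using ap_Suc[of "Suc 0" x] ap1 by (simp add: numeral_2_eq_2)

lemma mmv_Mt: "x \<in> vecs 3 \<Longrightarrow> mat_mul_vec 3 (Mt c) x = Lc c x"
  unfolding Mt_def by (simp add: mmv_matcomb mmv_id ap1 ap2 Lc_def)

lemma pow_Mt: "mat_pow 3 A k = Mt (R k)"
  by (rule supp_eq[OF supp_mat_pow supp_Mt]) (simp add: mmv_Mt ap_Lc)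

definition Z :: "'a matr" where "Z = (\<lambda>i j. 0)"
lemma Z_Mt: "Z = Mt (0, 0, 0)" by (simp add: Z_def Mt_def)
lemma mmv_Z: "mat_mul_vec 3 Z x = zvec" by (simp add: Z_def mat_mul_vec_def zvec_def fun_eq_iff)

lemma pow_nZ: "mat_pow 3 A k \<noteq> Z"
proof
  assume "mat_pow 3 A k = Z"
  then have "ap k (uvec 0) = zvec" by (simp add: mmv_Z)
  moreover have "ap k (uvec 0) \<noteq> zvec" by (rule ap_nz[OF uvec_vecs uvec_nz]) simp
  ultimately show False by simp
qed

lemma sc_min: "0 < k \<Longrightarrow> k < N \<Longrightarrow> mat_pow 3 A k \<noteq> mat_id 3"
  using sc by (simp add: singer_cycle_def N_def q_def)

lemma pow_distinct: "i < j \<Longrightarrow> j < N \<Longrightarrow> mat_pow 3 A i \<noteq> mat_pow 3 A j"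
proof
  assume ij: "i < j" "j < N" and e: "mat_pow 3 A i = mat_pow 3 A j"
  have "\<forall>x\<in>vecs 3. mat_mul_vec 3 (mat_pow 3 A (j - i)) x = mat_mul_vec 3 (mat_id 3) x"
  proof
    fix x :: "'a vect" assume x: "x \<in> vecs 3"
    have "ap i (ap (j - i) x) = ap (i + (j - i)) x" using x by (simp add: ap_add)
    also have "\<dots> = ap j x" using ij by simp
    also have "\<dots> = ap i x" using e by simp
    finally have "ap (j - i) x = x" using ap_inj[OF ap_vecs x] by blast
    then show "mat_mul_vec 3 (mat_pow 3 A (j - i)) x = mat_mul_vec 3 (mat_id 3) x" using x by (simp add: mmv_id)
  qed
  then have "mat_pow 3 A (j - i) = mat_id 3" by (rule supp_eq[OF supp_mat_pow supp_mat_id])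
  then show False using sc_min[of "j - i"] ij by simp
qed

lemma Mt_count: "inj Mt \<and> range Mt = insert Z ((\<lambda>k. mat_pow 3 A k) ` {..<N})"
proof -
  let ?S = "(\<lambda>k. mat_pow 3 A k) ` {..<N}"
  have injS: "inj_on (\<lambda>k. mat_pow 3 A k) {..<N}"
    by (rule inj_onI) (metis lessThan_iff linorder_neqE_nat pow_distinct)
  have cS: "card ?S = N" using card_image[OF injS] by simp
  have ZS: "Z \<notin> ?S"
  proof
    assume "Z \<in> ?S" then obtain k where "Z = mat_pow 3 A k" by auto
    then show False using pow_nZ[of k] by simp
  qed
  have sub: "insert Z ?S \<subseteq> range Mt" by (auto simp: Z_Mt pow_Mt)
  have c1: "card (insert Z ?S) = q^3" using cS ZS Suc_N by simp
  have "card (UNIV :: ('a \<times> 'a \<times> 'a) set) = card (UNIV::'a set) * card (UNIV :: ('a \<times> 'a) set)"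
    by (metis UNIV_Times_UNIV card_cartesian_product)
  moreover have "card (UNIV :: ('a \<times> 'a) set) = card (UNIV::'a set) * card (UNIV :: 'a set)"
    by (metis UNIV_Times_UNIV card_cartesian_product)
  ultimately have cU: "card (UNIV :: ('a \<times> 'a \<times> 'a) set) = q^3"
    by (simp add: q_def power3_eq_cube)
  have fin: "finite (range Mt)" by simp
  have "card (range Mt) \<le> q^3" using card_image_le[of "UNIV :: ('a \<times> 'a \<times> 'a) set" Mt] cU by simp
  moreover have "q^3 \<le> card (range Mt)" using card_mono[OF fin sub] c1 by simp
  ultimately have cr: "card (range Mt) = card (UNIV :: ('a \<times> 'a \<times> 'a) set)" using cU by simp
  have "inj Mt" by (rule eq_card_imp_inj_on[OF finite cr])
  moreover have "insert Z ?S = range Mt" by (rule card_subset_eq[OF fin sub]) (use cr cU c1 in simp)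
  ultimately show ?thesis by simp
qed

lemma Mt_eq_iff: "Mt c = Mt d \<longleftrightarrow> c = d"
  using Mt_count by (auto simp: inj_eq)

lemma Lc_zero: "(\<forall>x\<in>vecs 3. Lc c x = zvec) \<Longrightarrow> c = (0, 0, 0)"
proof -
  assume h: "\<forall>x\<in>vecs 3. Lc c x = zvec"
  have sZ: "supp 3 Z" by (simp add: supp_def Z_def)
  have "Mt c = Z" by (rule supp_eq[OF supp_Mt sZ]) (use h in \<open>auto simp: mmv_Mt mmv_Z\<close>)
  then show ?thesis by (simp add: Z_Mt Mt_eq_iff)
qed

lemma Lc_pow: "c \<noteq> (0, 0, 0) \<Longrightarrow> \<exists>m<N. Mt c = mat_pow 3 A m"
proof -
  assume c: "c \<noteq> (0, 0, 0)"
  have "Mt c \<in> range Mt" by simp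
  then have "Mt c \<in> insert Z ((\<lambda>k. mat_pow 3 A k) ` {..<N})" using Mt_count by simp
  moreover have "Mt c \<noteq> Z" using c by (simp add: Z_Mt Mt_eq_iff)
  ultimately show ?thesis by auto
qed

lemma Lc_inj: "c \<noteq> (0, 0, 0) \<Longrightarrow> x \<in> vecs 3 \<Longrightarrow> Lc c x = zvec \<Longrightarrow> x = zvec"
proof -
  assume c: "c \<noteq> (0, 0, 0)" and x: "x \<in> vecs 3" and e: "Lc c x = zvec"
  obtain m where m: "Mt c = mat_pow 3 A m" using Lc_pow[OF c] by blast
  have "ap m x = zvec" using e x by (simp add: mmv_Mt m[symmetric])
  then show ?thesis using ap_nz[OF x] by blast
qed

end

lemma fermat_field: "(y::'b::{finite,field}) ^ card (UNIV::'b set) = y"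
proof (cases "y = 0")
  case True
  have "card (UNIV::'b set) \<noteq> 0" by simp
  then show ?thesis using True by (simp add: power_0_left)
next
  case False
  let ?U = "UNIV - {0::'b}"
  have bij: "bij_betw (\<lambda>z. y * z) ?U ?U"
    by (rule bij_betw_byWitness[where f'="\<lambda>z. z / y"]) (use False in auto)
  have "(\<Prod>z\<in>?U. y * z) = (\<Prod>z\<in>?U. z)" by (rule prod.reindex_bij_betw[OF bij])
  then have "y ^ card ?U * (\<Prod>z\<in>?U. z) = (\<Prod>z\<in>?U. z)" by (simp add: prod.distrib)
  moreover have "(\<Prod>z\<in>?U. z) \<noteq> 0" by (simp add: prod_zero_iff)
  ultimately have "y ^ card ?U = 1" by simp
  moreover have "card ?U = card (UNIV::'b set) - 1" by (simp add: card_Diff_singleton)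
  moreover have "card (UNIV::'b set) = Suc (card (UNIV::'b set) - 1)"
    using finite_UNIV_card_ge_0[where 'a='b] by simp
  ultimately have "y ^ card (UNIV::'b set) = y * y ^ card ?U" by (metis power_Suc)
  then show ?thesis using \<open>y ^ card ?U = 1\<close> by simp
qed

lemma three_elems: "finite S \<Longrightarrow> 3 \<le> card S \<Longrightarrow> \<exists>a b c. a \<in> S \<and> b \<in> S \<and> c \<in> S \<and> a \<noteq> b \<and> a \<noteq> c \<and> b \<noteq> c"
proof -
  assume f: "finite S" and c: "3 \<le> card S"
  have "S \<noteq> {}" using c by auto
  then obtain a where a: "a \<in> S" by blast
  have c1: "2 \<le> card (S - {a})" using c a f by (simp add: card_Diff_singleton)
  have "S - {a} \<noteq> {}" proof assume h: "S - {a} = {}" have "card (S - {a}) = 0" unfolding h by simp then show False using c1 by simp qed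
  then obtain b where b: "b \<in> S - {a}" by blast
  have c2: "1 \<le> card (S - {a} - {b})" using c1 b f by (simp add: card_Diff_singleton)
  have "S - {a} - {b} \<noteq> {}" proof assume h: "S - {a} - {b} = {}" have "card (S - {a} - {b}) = 0" unfolding h by simp then show False using c2 by simp qed
  then obtain d where d: "d \<in> S - {a} - {b}" by blast
  show ?thesis using a b d by blast
qed

locale singer_ext = singer A for A :: "('a::{finite,field}) matr" +
  fixes \<phi> :: "'a \<Rightarrow> 'b::{finite,field}"
  assumes ce: "cubic_ext \<phi>"
begin

definition chi :: "'b poly" where "chi = [:- \<phi> e3, \<phi> e2, - \<phi> e1, 1:]"

lemma chi_nz: "chi \<noteq> 0" by (simp add: chi_def)
lemma deg_chi: "degree chi = 3" by (simp add: chi_def eval_nat_numeral)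

lemma poly_chi: "poly chi y = y^3 - \<phi> e1 * y^2 + \<phi> e2 * y - \<phi> e3"
  by (simp add: chi_def algebra_simps power2_eq_square power3_eq_cube)

lemma Rpoly: "\<exists>s. monom 1 k = chi * s + [:\<phi> (fst (R k)), \<phi> (fst (snd (R k))), \<phi> (snd (snd (R k))):]"
proof (induction k)
  case 0
  show ?case by (rule exI[of _ 0]) (simp add: R_0 ce_0[OF ce] ce_1[OF ce] monom_0 one_pCons)
next
  case (Suc k)
  then obtain s where s: "monom 1 k = chi * s + [:\<phi> (fst (R k)), \<phi> (fst (snd (R k))), \<phi> (snd (snd (R k))):]" by blast
  obtain r0 r1 r2 where r: "R k = (r0, r1, r2)" by (cases "R k") auto
  have m: "monom 1 (Suc k) = pCons 0 (chi * s) + [:0, \<phi> r0, \<phi> r1, \<phi> r2:]"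
    by (simp add: monom_Suc s r)
  have h1: "chi * (pCons 0 s + [:\<phi> r2:]) = pCons 0 (chi * s) + smult (\<phi> r2) chi"
    by (simp add: distrib_left mult_pCons_right)
  have h2: "[:0, \<phi> r0, \<phi> r1, \<phi> r2:] = smult (\<phi> r2) chi + [:\<phi> (r2 * e3), \<phi> (r0 - r2 * e2), \<phi> (r1 + r2 * e1):]"
    by (simp add: chi_def ce_mult[OF ce] ce_add[OF ce] ce_diff[OF ce])
  have eq: "monom 1 (Suc k) = chi * (pCons 0 s + [:\<phi> r2:]) + [:\<phi> (r2 * e3), \<phi> (r0 - r2 * e2), \<phi> (r1 + r2 * e1):]"
    unfolding m h1 h2 by (simp add: add.assoc)
  have Rk: "R (Suc k) = (r2 * e3, r0 - r2 * e2, r1 + r2 * e1)" by (simp add: R_Suc Rstep_def r)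
  show ?case using eq unfolding Rk fst_conv snd_conv by blast
qed

lemma card_b: "card (UNIV::'b set) = q^3" using ce by (simp add: cubic_ext_def q_def)

lemma R_Q: "R (q^3) = (0, 1, 0)"
proof -
  have "mat_pow 3 A (q^3) = mat_pow 3 A 1"
  proof (rule supp_eq[OF supp_mat_pow supp_mat_pow], intro ballI)
    fix x :: "'a vect" assume x: "x \<in> vecs 3"
    have "ap (1 + N) x = ap 1 (ap N x)" using x by (rule ap_add)
    then show "ap (q^3) x = ap 1 x" using Suc_N x by (simp add: ap_N)
  qed
  then have "Mt (R (q^3)) = Mt (R 1)" by (simp add: pow_Mt)
  then have "R (q^3) = R 1" by (simp add: Mt_eq_iff)
  then show ?thesis by (simp add: R_Suc[of 0, simplified] R_0 Rstep_def)
qed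

lemma chi_roots: "3 \<le> card {y. poly chi y = 0}"
proof -
  let ?Q = "q^3"
  obtain s where s: "monom 1 ?Q = chi * s + [:0, 1:]"
    using Rpoly[of ?Q] by (auto simp: R_Q ce_0[OF ce] ce_1[OF ce])
  have Q8: "8 \<le> ?Q" using power_mono[OF q2, of 3] by simp
  have prod0: "poly chi y * poly s y = 0" for y
  proof -
    have "poly (monom 1 ?Q) y = y" using fermat_field[of y] card_b by (simp add: poly_monom)
    then show ?thesis using s by simp
  qed
  have snz: "s \<noteq> 0"
  proof
    assume "s = 0"
    then have "degree (monom (1::'b) ?Q) = 1" using s by simp
    then show False using Q8 by (simp add: degree_monom_eq)
  qed
  have dcs: "degree (chi * s) = 3 + degree s" using chi_nz snz by (simp add: degree_mult_eq deg_chi)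
  have "degree (chi * s + [:0, 1:]) = degree (chi * s)"
    by (rule degree_add_eq_left) (simp add: dcs)
  then have ds: "?Q = 3 + degree s"
  proof -
    assume h: "degree (chi * s + [:0, 1:]) = degree (chi * s)"
    have "?Q = degree (monom (1::'b) ?Q)" by (simp add: degree_monom_eq)
    also have "\<dots> = degree (chi * s + [:0, 1:])" by (simp only: s)
    finally show ?thesis using h dcs by simp
  qed
  have "UNIV = {y. poly chi y = 0} \<union> {y. poly s y = 0}" using prod0 by auto
  then have "?Q \<le> card {y. poly chi y = 0} + card {y. poly s y = 0}"
    using card_Un_le[of "{y. poly chi y = 0}" "{y. poly s y = 0}"] card_b by simp
  moreover have "card {y. poly s y = 0} \<le> degree s" by (rule card_poly_roots_bound[OF snz])
  ultimately show ?thesis using ds by simp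
qed

abbreviation Ab :: "'b matr" where "Ab \<equiv> (\<lambda>i j. \<phi> (A i j))"

lemma ce_e: "\<phi> e1 = \<phi> (A 0 0) + \<phi> (A 1 1) + \<phi> (A 2 2)"
  "\<phi> e2 = \<phi> (A 0 0) * \<phi> (A 1 1) - \<phi> (A 0 1) * \<phi> (A 1 0) + \<phi> (A 0 0) * \<phi> (A 2 2) - \<phi> (A 0 2) * \<phi> (A 2 0) + \<phi> (A 1 1) * \<phi> (A 2 2) - \<phi> (A 1 2) * \<phi> (A 2 1)"
  "\<phi> e3 = \<phi> (A 0 0) * (\<phi> (A 1 1) * \<phi> (A 2 2) - \<phi> (A 1 2) * \<phi> (A 2 1)) - \<phi> (A 0 1) * (\<phi> (A 1 0) * \<phi> (A 2 2) - \<phi> (A 1 2) * \<phi> (A 2 0)) + \<phi> (A 0 2) * (\<phi> (A 1 0) * \<phi> (A 2 1) - \<phi> (A 1 1) * \<phi> (A 2 0))"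
  by (simp_all add: e1_def e2_def e3_def ce_add[OF ce] ce_mult[OF ce] ce_diff[OF ce])

lemma eigvec: "poly chi \<omega> = 0 \<Longrightarrow> \<exists>w\<in>vecs 3. w \<noteq> zvec \<and> mat_mul_vec 3 Ab w = (\<lambda>i. \<omega> * w i)"
proof -
  assume r: "poly chi \<omega> = 0"
  define col where "col j = (\<lambda>i. if i < 3 then Ab i j - (if i = j then \<omega> else 0) else 0)" for j :: nat
  have cv: "col j \<in> vecs 3" for j by (simp add: col_def vecs_def)
  have "det3 (col 0) (col 1) (col 2) = - poly chi \<omega>"
    by (simp add: col_def det3_def poly_chi ce_e) algebra
  then have "det3 (col 0) (col 1) (col 2) = 0" using r by simp
  then obtain a b c where abc: "a \<noteq> 0 \<or> b \<noteq> 0 \<or> c \<noteq> 0" and z: "(\<lambda>i. a * col 0 i + b * col 1 i + c * col 2 i) = zvec"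
    using det3_zero_dep[OF _ cv cv cv] by blast
  define w where "w = (\<lambda>i::nat. if i = 0 then a else if i = 1 then b else if i = 2 then c else 0)"
  have wv: "w \<in> vecs 3" by (simp add: w_def vecs_def)
  have "w 0 \<noteq> 0 \<or> w 1 \<noteq> 0 \<or> w 2 \<noteq> 0" using abc by (simp add: w_def)
  then have wnz: "w \<noteq> zvec" by (auto simp: zvec_def)
  have zi: "a * col 0 i + b * col 1 i + c * col 2 i = 0" for i using z by (simp add: zvec_def fun_eq_iff)
  have "mat_mul_vec 3 Ab w = (\<lambda>i. \<omega> * w i)"
  proof (rule vecs3_eqI[OF mmv_vecs])
    show "(\<lambda>i. \<omega> * w i) \<in> vecs 3" using wv by (simp add: vecs_def)
    show "mat_mul_vec 3 Ab w 0 = \<omega> * w 0" using zi[of 0] by (simp add: mmv_explicit w_def col_def algebra_simps)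
    show "mat_mul_vec 3 Ab w 1 = \<omega> * w 1" using zi[of 1] by (simp add: mmv_explicit w_def col_def algebra_simps)
    show "mat_mul_vec 3 Ab w 2 = \<omega> * w 2" using zi[of 2] by (simp add: mmv_explicit w_def col_def algebra_simps)
  qed
  then show ?thesis using wv wnz by blast
qed
end

lemma pol_comb33: "pol n c (\<lambda>i. a0 * x0 i + a1 * x1 i + a2 * x2 i) (\<lambda>i. b0 * x0 i + b1 * x1 i + b2 * x2 i)
  = a0 * b0 * pol n c x0 x0 + a1 * b1 * pol n c x1 x1 + a2 * b2 * pol n c x2 x2
   + (a0 * b1 + a1 * b0) * pol n c x0 x1 + (a0 * b2 + a2 * b0) * pol n c x0 x2 + (a1 * b2 + a2 * b1) * pol n c x1 (x2::('a::comm_ring_1) vect)"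
proof -
  have "pol n c (\<lambda>i. a0 * x0 i + a1 * x1 i + a2 * x2 i) (\<lambda>i. b0 * x0 i + b1 * x1 i + b2 * x2 i)
    = (\<Sum>i<n. \<Sum>j\<in>{i..<n}. a0 * b0 * (c i j * (x0 i * x0 j + x0 i * x0 j)) + a1 * b1 * (c i j * (x1 i * x1 j + x1 i * x1 j))
       + a2 * b2 * (c i j * (x2 i * x2 j + x2 i * x2 j)) + (a0 * b1 + a1 * b0) * (c i j * (x0 i * x1 j + x1 i * x0 j))
       + (a0 * b2 + a2 * b0) * (c i j * (x0 i * x2 j + x2 i * x0 j)) + (a1 * b2 + a2 * b1) * (c i j * (x1 i * x2 j + x2 i * x1 j)))"
    unfolding pol_def by (intro sum.cong refl) (simp add: algebra_simps)
  also have "\<dots> = a0 * b0 * pol n c x0 x0 + a1 * b1 * pol n c x1 x1 + a2 * b2 * pol n c x2 x2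
   + (a0 * b1 + a1 * b0) * pol n c x0 x1 + (a0 * b2 + a2 * b0) * pol n c x0 x2 + (a1 * b2 + a2 * b1) * pol n c x1 x2"
    by (simp add: pol_def sum.distrib sum_distrib_left)
  finally show ?thesis .
qed

context singer_ext begin

lemma three_roots: "\<exists>o0 o1 o2. poly chi o0 = 0 \<and> poly chi o1 = 0 \<and> poly chi o2 = 0 \<and> o0 \<noteq> o1 \<and> o0 \<noteq> o2 \<and> o1 \<noteq> o2"
  using three_elems[OF _ chi_roots] by auto

lemma eig_not_rational:
  assumes wv: "w \<in> vecs 3" and wnz: "w \<noteq> zvec" and we: "mat_mul_vec 3 Ab w = (\<lambda>i. \<omega> * w i)"
  shows "\<not> (\<exists>v\<in>vecs 3. \<exists>t. w = (\<lambda>i. t * \<phi> (v i)))"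
proof
  assume "\<exists>v\<in>vecs 3. \<exists>t. w = (\<lambda>i. t * \<phi> (v i))"
  then obtain v t where v: "v \<in> vecs 3" and wt: "w = (\<lambda>i. t * \<phi> (v i))" by blast
  have t: "t \<noteq> 0" using wnz wt by (auto simp: zvec_def)
  have vnz: "v \<noteq> zvec" using wnz wt by (auto simp: zvec_def ce_0[OF ce])
  have "mat_mul_vec 3 Ab w = (\<lambda>i. t * \<phi> (am v i))"
    unfolding wt by (simp add: mmv_smult ce_mmv[OF ce])
  then have e: "\<phi> (am v i) = \<omega> * \<phi> (v i)" for i using we t unfolding wt by (auto simp: fun_eq_iff)
  obtain m where m: "m < 3" "v m \<noteq> 0"
  proof -
    have "\<exists>m. v m \<noteq> 0" using vnz by (auto simp: zvec_def fun_eq_iff)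
    then obtain m where "v m \<noteq> 0" by blast
    moreover then have "m < 3" using v by (metis not_less vecsD)
    ultimately show ?thesis using that by blast
  qed
  define cc where "cc = am v m / v m"
  have om: "\<omega> = \<phi> cc"
    using e[of m] m(2) ce_inj[OF ce, of "v m" 0] ce_0[OF ce] by (simp add: cc_def ce_divide[OF ce] field_simps)
  have "am v i = cc * v i" for i
    using e[of i] by (simp add: om ce_mult[OF ce, symmetric] ce_inj[OF ce])
  then have "Lc (- cc, 1, 0) v = zvec" by (simp add: Lc_def zvec_def fun_eq_iff)
  then have "v = zvec" by (rule Lc_inj[rotated, OF v]) simp
  then show False using vnz by simp
qed

lemma in_delta:
  assumes "w \<in> vecs 3" "w \<noteq> zvec" "mat_mul_vec 3 Ab w = (\<lambda>i. \<omega> * w i)"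
  shows "w \<in> delta_vertices \<phi> A"
  using assms eig_not_rational[OF assms] unfolding delta_vertices_def by blast

lemma AbN: "mat_pow 3 Ab N = mat_id 3"
  using ce_mat_pow[OF ce, of 3 A N] AN ce_mat_id[OF ce, of 3] by simp

lemma Ab_pow_eig: "w \<in> vecs 3 \<Longrightarrow> mat_mul_vec 3 Ab w = (\<lambda>i. \<omega> * w i) \<Longrightarrow> mat_mul_vec 3 (mat_pow 3 Ab k) w = (\<lambda>i. \<omega>^k * w i)"
proof (induction k)
  case 0 then show ?case by (simp add: mat_pow_0 mmv_id)
next
  case (Suc k)
  have "mat_mul_vec 3 (mat_pow 3 Ab (Suc k)) w = mat_mul_vec 3 Ab (\<lambda>i. \<omega>^k * w i)" using Suc by (simp add: mmv_pow_Suc)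
  also have "\<dots> = (\<lambda>i. \<omega>^k * (\<omega> * w i))" using Suc by (simp add: mmv_smult)
  also have "\<dots> = (\<lambda>i. \<omega>^Suc k * w i)" by (simp add: fun_eq_iff mult_ac)
  finally show ?case .
qed

end

locale eigs = singer_ext A \<phi> for A :: "('a::{finite,field}) matr" and \<phi> :: "'a \<Rightarrow> 'b::{finite,field}" +
  fixes c :: "'a matr" and o0 o1 o2 :: 'b and w0 w1 w2 :: "'b vect"
  assumes odist: "o0 \<noteq> o1" "o0 \<noteq> o2" "o1 \<noteq> o2"
  and wv: "w0 \<in> vecs 3" "w1 \<in> vecs 3" "w2 \<in> vecs 3"
  and wnz: "w0 \<noteq> zvec" "w1 \<noteq> zvec" "w2 \<noteq> zvec"
  and we: "mat_mul_vec 3 Ab w0 = (\<lambda>i. o0 * w0 i)" "mat_mul_vec 3 Ab w1 = (\<lambda>i. o1 * w1 i)" "mat_mul_vec 3 Ab w2 = (\<lambda>i. o2 * w2 i)"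
  and bund: "qf 3 (\<lambda>i j. \<phi> (c i j)) w0 = 0" "qf 3 (\<lambda>i j. \<phi> (c i j)) w1 = 0" "qf 3 (\<lambda>i j. \<phi> (c i j)) w2 = 0"
begin

abbreviation cb where "cb \<equiv> (\<lambda>i j. \<phi> (c i j))"
abbreviation vb :: "'a vect \<Rightarrow> 'b vect" where "vb x \<equiv> (\<lambda>i. \<phi> (x i))"
abbreviation D where "D \<equiv> det3 w0 w1 w2"

lemma mmv_zvec: "mat_mul_vec n M zvec = (zvec::('c::comm_ring_1) vect)"
  by (simp add: mat_mul_vec_def zvec_def fun_eq_iff)

lemma coord_zero:
  assumes z: "(\<lambda>i. a * w0 i + b * w1 i + d * w2 i) = zvec"
  shows "a = 0 \<and> b = 0 \<and> d = 0"
proof -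
  have z1: "(\<lambda>i. a * o0 * w0 i + b * o1 * w1 i + d * o2 * w2 i) = zvec"
    using arg_cong[OF z, of "mat_mul_vec 3 Ab"] by (simp add: mmv_comb3 we mmv_zvec mult.assoc)
  have z2: "(\<lambda>i. a * o0 * o0 * w0 i + b * o1 * o1 * w1 i + d * o2 * o2 * w2 i) = zvec"
    using arg_cong[OF z1, of "mat_mul_vec 3 Ab"] by (simp add: mmv_comb3 we mmv_zvec mmv_smult mult.assoc)
  have e0: "a * w0 i + b * w1 i + d * w2 i = 0" for i using z by (simp add: zvec_def fun_eq_iff)
  have e1: "a * o0 * w0 i + b * o1 * w1 i + d * o2 * w2 i = 0" for i using z1 by (simp add: zvec_def fun_eq_iff)
  have e2: "a * o0 * o0 * w0 i + b * o1 * o1 * w1 i + d * o2 * o2 * w2 i = 0" for i using z2 by (simp add: zvec_def fun_eq_iff)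
  have "a * ((o0 - o1) * (o0 - o2)) * w0 i = 0" for i
  proof -
    have "a * ((o0 - o1) * (o0 - o2)) * w0 i = (a * o0 * o0 * w0 i + b * o1 * o1 * w1 i + d * o2 * o2 * w2 i)
       - (o1 + o2) * (a * o0 * w0 i + b * o1 * w1 i + d * o2 * w2 i) + o1 * o2 * (a * w0 i + b * w1 i + d * w2 i)"
      by algebra
    then show ?thesis using e0 e1 e2 by simp
  qed
  moreover have "b * ((o1 - o0) * (o1 - o2)) * w1 i = 0" for i
  proof -
    have "b * ((o1 - o0) * (o1 - o2)) * w1 i = (a * o0 * o0 * w0 i + b * o1 * o1 * w1 i + d * o2 * o2 * w2 i)
       - (o0 + o2) * (a * o0 * w0 i + b * o1 * w1 i + d * o2 * w2 i) + o0 * o2 * (a * w0 i + b * w1 i + d * w2 i)"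
      by algebra
    then show ?thesis using e0 e1 e2 by simp
  qed
  moreover have "d * ((o2 - o0) * (o2 - o1)) * w2 i = 0" for i
  proof -
    have "d * ((o2 - o0) * (o2 - o1)) * w2 i = (a * o0 * o0 * w0 i + b * o1 * o1 * w1 i + d * o2 * o2 * w2 i)
       - (o0 + o1) * (a * o0 * w0 i + b * o1 * w1 i + d * o2 * w2 i) + o0 * o1 * (a * w0 i + b * w1 i + d * w2 i)"
      by algebra
    then show ?thesis using e0 e1 e2 by simp
  qed
  moreover have "\<exists>i. w0 i \<noteq> 0" "\<exists>i. w1 i \<noteq> 0" "\<exists>i. w2 i \<noteq> 0" using wnz by (auto simp: zvec_def fun_eq_iff)
  ultimately show ?thesis using odist by (metis mult_eq_0_iff right_minus_eq)
qed

lemma D_nz: "D \<noteq> 0"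
proof
  assume "D = 0"
  then obtain a b d where abd: "a \<noteq> 0 \<or> b \<noteq> 0 \<or> d \<noteq> 0" and z: "(\<lambda>i. a * w0 i + b * w1 i + d * w2 i) = zvec"
    using det3_zero_dep[OF _ wv] by blast
  then show False using coord_zero by blast
qed

definition k0 where "k0 y = det3 y w1 w2 / D"
definition k1 where "k1 y = det3 w0 y w2 / D"
definition k2 where "k2 y = det3 w0 w1 y / D"

lemma rep: "y \<in> vecs 3 \<Longrightarrow> y = (\<lambda>i. k0 y * w0 i + k1 y * w1 i + k2 y * w2 i)"
  unfolding k0_def k1_def k2_def by (rule cramer[OF D_nz _ wv])

lemma uniq:
  assumes "y = (\<lambda>i. a * w0 i + b * w1 i + d * w2 i)"
  shows "k0 y = a" "k1 y = b" "k2 y = d"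
proof -
  have "det3 y w1 w2 = a * D" "det3 w0 y w2 = b * D" "det3 w0 w1 y = d * D"
    unfolding assms by (simp_all add: det3_def algebra_simps)
  then show "k0 y = a" "k1 y = b" "k2 y = d" using D_nz by (simp_all add: k0_def k1_def k2_def)
qed

lemma vb_vecs: "x \<in> vecs 3 \<Longrightarrow> vb x \<in> vecs 3" by (rule ce_vecs[OF ce])

lemma pow_coords:
  assumes x: "x \<in> vecs 3"
  shows "k0 (vb (ap k x)) = o0^k * k0 (vb x)" "k1 (vb (ap k x)) = o1^k * k1 (vb x)" "k2 (vb (ap k x)) = o2^k * k2 (vb x)"
proof -
  have "vb (ap k x) = mat_mul_vec 3 (mat_pow 3 Ab k) (vb x)"
    by (simp add: ce_mmv[OF ce] ce_mat_pow[OF ce, symmetric])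
  also have "\<dots> = mat_mul_vec 3 (mat_pow 3 Ab k) (\<lambda>i. k0 (vb x) * w0 i + k1 (vb x) * w1 i + k2 (vb x) * w2 i)"
    using rep[OF vb_vecs[OF x]] by simp
  also have "\<dots> = (\<lambda>i. o0^k * k0 (vb x) * w0 i + o1^k * k1 (vb x) * w1 i + o2^k * k2 (vb x) * w2 i)"
    by (subst mmv_comb3) (simp add: Ab_pow_eig[OF wv(1) we(1)] Ab_pow_eig[OF wv(2) we(2)] Ab_pow_eig[OF wv(3) we(3)] mult_ac)
  finally have e: "vb (ap k x) = \<dots>" .
  show "k0 (vb (ap k x)) = o0^k * k0 (vb x)" "k1 (vb (ap k x)) = o1^k * k1 (vb x)" "k2 (vb (ap k x)) = o2^k * k2 (vb x)"
    using uniq[OF e] by simp_all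
qed

definition P01 where "P01 = pol 3 cb w0 w1"
definition P02 where "P02 = pol 3 cb w0 w2"
definition P12 where "P12 = pol 3 cb w1 w2"

lemma qf_coords: "qf 3 cb (\<lambda>i. a * w0 i + b * w1 i + d * w2 i) = a * b * P01 + a * d * P02 + b * d * P12"
  by (simp add: qf_comb3 bund P01_def P02_def P12_def)

lemma pol_coords: "pol 3 cb (\<lambda>i. a0 * w0 i + a1 * w1 i + a2 * w2 i) (\<lambda>i. b0 * w0 i + b1 * w1 i + b2 * w2 i)
   = (a0 * b1 + a1 * b0) * P01 + (a0 * b2 + a2 * b0) * P02 + (a1 * b2 + a2 * b1) * P12"
  by (simp add: pol_comb33 pol_self bund P01_def P02_def P12_def)

lemma qf_vb: "x \<in> vecs 3 \<Longrightarrow> \<phi> (qf 3 c x) = k0 (vb x) * k1 (vb x) * P01 + k0 (vb x) * k2 (vb x) * P02 + k1 (vb x) * k2 (vb x) * P12"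
proof -
  assume x: "x \<in> vecs 3"
  have "\<phi> (qf 3 c x) = qf 3 cb (vb x)" by (rule ce_qf[OF ce])
  also have "\<dots> = qf 3 cb (\<lambda>i. k0 (vb x) * w0 i + k1 (vb x) * w1 i + k2 (vb x) * w2 i)"
    using arg_cong[OF rep[OF vb_vecs[OF x]], of "qf 3 cb"] .
  finally show ?thesis by (simp add: qf_coords)
qed

lemma pol_vb: "x \<in> vecs 3 \<Longrightarrow> y \<in> vecs 3 \<Longrightarrow> \<phi> (pol 3 c x y) =
   (k0 (vb x) * k1 (vb y) + k1 (vb x) * k0 (vb y)) * P01 + (k0 (vb x) * k2 (vb y) + k2 (vb x) * k0 (vb y)) * P02
   + (k1 (vb x) * k2 (vb y) + k2 (vb x) * k1 (vb y)) * P12"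
proof -
  assume x: "x \<in> vecs 3" and y: "y \<in> vecs 3"
  have "\<phi> (pol 3 c x y) = pol 3 cb (vb x) (vb y)" by (rule ce_pol[OF ce])
  also have "\<dots> = pol 3 cb (\<lambda>i. k0 (vb x) * w0 i + k1 (vb x) * w1 i + k2 (vb x) * w2 i) (vb y)"
    using arg_cong[OF rep[OF vb_vecs[OF x]], of "\<lambda>z. pol 3 cb z (vb y)"] .
  also have "\<dots> = pol 3 cb (\<lambda>i. k0 (vb x) * w0 i + k1 (vb x) * w1 i + k2 (vb x) * w2 i) (\<lambda>i. k0 (vb y) * w0 i + k1 (vb y) * w1 i + k2 (vb y) * w2 i)"
    using arg_cong[OF rep[OF vb_vecs[OF y]], of "\<lambda>z. pol 3 cb (\<lambda>i. k0 (vb x) * w0 i + k1 (vb x) * w1 i + k2 (vb x) * w2 i) z"] .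
  finally show ?thesis by (simp add: pol_coords)
qed

end

definition alph :: "'b::field \<Rightarrow> 'b \<Rightarrow> 'b \<Rightarrow> 'b \<Rightarrow> 'b \<Rightarrow> 'b \<Rightarrow> 'b" where
  "alph d0 d1 d2 l1 l2 l3 = d2 * d1 * d1 + 2 * d0 * d1 + (d0 + d1 * d2)^2 *
     ((l1 - d2) * (l2 - d2) + (l1 - d2) * (l3 - d2) + (l2 - d2) * (l3 - d2) + d2 * ((l1 - d2) + (l2 - d2) + (l3 - d2)) + d2 * d2)
     / ((l1 - d2) * (l2 - d2) * (l3 - d2))"
definition bet :: "'b::field \<Rightarrow> 'b \<Rightarrow> 'b \<Rightarrow> 'b \<Rightarrow> 'b \<Rightarrow> 'b \<Rightarrow> 'b" where
  "bet d0 d1 d2 l1 l2 l3 = (- ((d0 + d1 * d2) ^ 2)) / ((l1 - d2) * (l2 - d2) * (l3 - d2))"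

lemma pair_id:
  fixes l1 l2 l3 d0 d1 d2 :: "'b::field"
  assumes "l1 \<noteq> d2" "l2 \<noteq> d2" "l3 \<noteq> d2"
  shows "d2 * ((d0 + d1 * l1) / (l1 - d2)) * ((d0 + d1 * l2) / (l2 - d2)) + d0 * ((d0 + d1 * l1) / (l1 - d2) + (d0 + d1 * l2) / (l2 - d2))
    = alph d0 d1 d2 l1 l2 l3 + bet d0 d1 d2 l1 l2 l3 * l1 * l2"
proof -
  define m1 m2 m3 where "m1 = l1 - d2" and "m2 = l2 - d2" and "m3 = l3 - d2"
  have n: "m1 \<noteq> 0" "m2 \<noteq> 0" "m3 \<noteq> 0" using assms by (auto simp: m1_def m2_def m3_def)
  have l: "l1 = m1 + d2" "l2 = m2 + d2" "l3 = m3 + d2" by (auto simp: m1_def m2_def m3_def)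
  have "d2 * ((d0 + d1 * (m1 + d2)) / m1) * ((d0 + d1 * (m2 + d2)) / m2) + d0 * ((d0 + d1 * (m1 + d2)) / m1 + (d0 + d1 * (m2 + d2)) / m2)
    = d2 * d1 * d1 + 2 * d0 * d1 + (d0 + d1 * d2)^2 * (m1 * m2 + m1 * m3 + m2 * m3 + d2 * (m1 + m2 + m3) + d2 * d2) / (m1 * m2 * m3)
      + ((- ((d0 + d1 * d2) ^ 2)) / (m1 * m2 * m3)) * (m1 + d2) * (m2 + d2)"
    using n by (simp add: field_simps) (simp add: algebra_simps power2_eq_square)
  then show ?thesis unfolding alph_def bet_def l by simp
qed

lemma alph_sym: "alph d0 d1 d2 l1 l3 l2 = alph d0 d1 d2 l1 l2 l3" "alph d0 d1 d2 l2 l3 l1 = alph d0 d1 d2 l1 l2 l3"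
  unfolding alph_def by (simp_all add: algebra_simps)
lemma bet_sym: "bet d0 d1 d2 l1 l3 l2 = bet d0 d1 d2 l1 l2 l3" "bet d0 d1 d2 l2 l3 l1 = bet d0 d1 d2 l1 l2 l3"
  unfolding bet_def by (simp_all add: algebra_simps)


context eigs begin

lemma k_lin:
  "k0 (\<lambda>i. a * x i + b * y i + d * z i) = a * k0 x + b * k0 y + d * k0 z"
  "k1 (\<lambda>i. a * x i + b * y i + d * z i) = a * k1 x + b * k1 y + d * k1 z"
  "k2 (\<lambda>i. a * x i + b * y i + d * z i) = a * k2 x + b * k2 y + d * k2 z"
proof -
  have "det3 (\<lambda>i. a * x i + b * y i + d * z i) w1 w2 = a * det3 x w1 w2 + b * det3 y w1 w2 + d * det3 z w1 w2"
    "det3 w0 (\<lambda>i. a * x i + b * y i + d * z i) w2 = a * det3 w0 x w2 + b * det3 w0 y w2 + d * det3 w0 z w2"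
    "det3 w0 w1 (\<lambda>i. a * x i + b * y i + d * z i) = a * det3 w0 w1 x + b * det3 w0 w1 y + d * det3 w0 w1 z"
    by (simp_all add: det3_def algebra_simps)
  then show "k0 (\<lambda>i. a * x i + b * y i + d * z i) = a * k0 x + b * k0 y + d * k0 z"
    "k1 (\<lambda>i. a * x i + b * y i + d * z i) = a * k1 x + b * k1 y + d * k1 z"
    "k2 (\<lambda>i. a * x i + b * y i + d * z i) = a * k2 x + b * k2 y + d * k2 z"
    by (simp_all add: k0_def k1_def k2_def add_divide_distrib)
qed

lemma phi_zero: "\<phi> x = 0 \<Longrightarrow> x = 0" using ce_inj[OF ce, of x 0] ce_0[OF ce] by simp

lemma KI2:
  assumes x: "x \<in> vecs 3" and h1: "qf 3 c x = 0" and h2: "qf 3 c (ap k x) = 0"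
  shows "pol 3 c (ap k x) (ap k (ap k x)) = 0"
proof -
  define a0 a1 a2 where "a0 = k0 (vb x)" and "a1 = k1 (vb x)" and "a2 = k2 (vb x)"
  define l0 l1 l2 where "l0 = o0^k" and "l1 = o1^k" and "l2 = o2^k"
  have bx: "x' \<in> vecs 3 \<Longrightarrow> ap k x' \<in> vecs 3" for x' by (rule ap_vecs)
  note pc1 = pow_coords[OF x, of k] and pc2 = pow_coords[OF bx[OF x], of k]
  have H1: "a0 * a1 * P01 + a0 * a2 * P02 + a1 * a2 * P12 = 0"
    using qf_vb[OF x] h1 ce_0[OF ce] by (simp add: a0_def a1_def a2_def)
  have H2: "(l0 * a0) * (l1 * a1) * P01 + (l0 * a0) * (l2 * a2) * P02 + (l1 * a1) * (l2 * a2) * P12 = 0"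
    using qf_vb[OF bx[OF x]] h2 ce_0[OF ce] pc1 by (simp add: a0_def a1_def a2_def l0_def l1_def l2_def)
  have "\<phi> (pol 3 c (ap k x) (ap k (ap k x))) =
     ((l0 * a0) * (l1 * (l1 * a1)) + (l1 * a1) * (l0 * (l0 * a0))) * P01 + ((l0 * a0) * (l2 * (l2 * a2)) + (l2 * a2) * (l0 * (l0 * a0))) * P02
   + ((l1 * a1) * (l2 * (l2 * a2)) + (l2 * a2) * (l1 * (l1 * a1))) * P12"
    using pol_vb[OF bx[OF x] bx[OF bx[OF x]]] pc1 pc2 by (simp add: a0_def a1_def a2_def l0_def l1_def l2_def)
  also have "\<dots> = (l0 + l1 + l2) * ((l0 * a0) * (l1 * a1) * P01 + (l0 * a0) * (l2 * a2) * P02 + (l1 * a1) * (l2 * a2) * P12)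
     - l0 * l1 * l2 * (a0 * a1 * P01 + a0 * a2 * P02 + a1 * a2 * P12)" by algebra
  also have "\<dots> = 0" using H1 H2 by simp
  finally show ?thesis by (rule phi_zero)
qed

lemma KI1:
  assumes p: "p \<in> vecs 3" and u: "u \<in> vecs 3" and h1: "qf 3 c p = 0" and h2: "qf 3 c (ap k p) = 0"
    and bu: "ap k u = (\<lambda>i. d0 * p i + d1 * ap k p i + d2 * u i)"
    and n: "o0^k \<noteq> \<phi> d2" "o1^k \<noteq> \<phi> d2" "o2^k \<noteq> \<phi> d2"
  shows "d2 * qf 3 c u + d0 * pol 3 c p u = 0"
proof -
  define a0 a1 a2 where "a0 = k0 (vb p)" and "a1 = k1 (vb p)" and "a2 = k2 (vb p)"
  define z0 z1 z2 where "z0 = k0 (vb u)" and "z1 = k1 (vb u)" and "z2 = k2 (vb u)"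
  define l0 l1 l2 where "l0 = o0^k" and "l1 = o1^k" and "l2 = o2^k"
  define D0 D1 D2 where "D0 = \<phi> d0" and "D1 = \<phi> d1" and "D2 = \<phi> d2"
  note pcp = pow_coords[OF p, of k] and pcu = pow_coords[OF u, of k]
  have H1: "a0 * a1 * P01 + a0 * a2 * P02 + a1 * a2 * P12 = 0"
    using qf_vb[OF p] h1 ce_0[OF ce] by (simp add: a0_def a1_def a2_def)
  have H2: "(l0 * a0) * (l1 * a1) * P01 + (l0 * a0) * (l2 * a2) * P02 + (l1 * a1) * (l2 * a2) * P12 = 0"
    using qf_vb[OF ap_vecs[of k p]] h2 ce_0[OF ce] pcp by (simp add: a0_def a1_def a2_def l0_def l1_def l2_def)
  have vbu: "vb (ap k u) = (\<lambda>i. D0 * vb p i + D1 * vb (ap k p) i + D2 * vb u i)"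
    unfolding bu by (simp add: D0_def D1_def D2_def ce_add[OF ce] ce_mult[OF ce])
  have zc: "l0 * z0 = D0 * a0 + D1 * (l0 * a0) + D2 * z0" "l1 * z1 = D0 * a1 + D1 * (l1 * a1) + D2 * z1"
    "l2 * z2 = D0 * a2 + D1 * (l2 * a2) + D2 * z2"
    using arg_cong[OF vbu, of k0] arg_cong[OF vbu, of k1] arg_cong[OF vbu, of k2] pcu pcp
    by (simp_all add: k_lin a0_def a1_def a2_def z0_def z1_def z2_def l0_def l1_def l2_def)
  have nn: "l0 \<noteq> D2" "l1 \<noteq> D2" "l2 \<noteq> D2" using n by (simp_all add: l0_def l1_def l2_def D2_def)
  define r0 r1 r2 where "r0 = (D0 + D1 * l0) / (l0 - D2)" and "r1 = (D0 + D1 * l1) / (l1 - D2)" and "r2 = (D0 + D1 * l2) / (l2 - D2)"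
  have zr: "z0 = a0 * r0" "z1 = a1 * r1" "z2 = a2 * r2"
    using zc nn by (simp_all add: r0_def r1_def r2_def field_simps algebra_simps)
  define al be where "al = alph D0 D1 D2 l0 l1 l2" and "be = bet D0 D1 D2 l0 l1 l2"
  have t01: "D2 * r0 * r1 + D0 * (r0 + r1) = al + be * l0 * l1"
    unfolding r0_def r1_def al_def be_def by (rule pair_id[OF nn])
  have t02: "D2 * r0 * r2 + D0 * (r0 + r2) = al + be * l0 * l2"
    proof -
    have "alph D0 D1 D2 l0 l2 l1 = al" "bet D0 D1 D2 l0 l2 l1 = be" unfolding al_def be_def alph_def bet_def by (simp_all add: algebra_simps)
    then show ?thesis using pair_id[OF nn(1) nn(3) nn(2), of D0 D1] unfolding r0_def r2_def by simp
  qed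
  have t12: "D2 * r1 * r2 + D0 * (r1 + r2) = al + be * l1 * l2"
    proof -
    have "alph D0 D1 D2 l1 l2 l0 = al" "bet D0 D1 D2 l1 l2 l0 = be" unfolding al_def be_def alph_def bet_def by (simp_all add: algebra_simps)
    then show ?thesis using pair_id[OF nn(2) nn(3) nn(1), of D0 D1] unfolding r1_def r2_def by simp
  qed
  have "\<phi> (d2 * qf 3 c u + d0 * pol 3 c p u) = D2 * (z0 * z1 * P01 + z0 * z2 * P02 + z1 * z2 * P12)
     + D0 * ((a0 * z1 + a1 * z0) * P01 + (a0 * z2 + a2 * z0) * P02 + (a1 * z2 + a2 * z1) * P12)"
    using qf_vb[OF u] pol_vb[OF p u]
    by (simp add: ce_add[OF ce] ce_mult[OF ce] D0_def D2_def a0_def a1_def a2_def z0_def z1_def z2_def)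
  also have "\<dots> = a0 * a1 * P01 * (D2 * r0 * r1 + D0 * (r0 + r1)) + a0 * a2 * P02 * (D2 * r0 * r2 + D0 * (r0 + r2))
     + a1 * a2 * P12 * (D2 * r1 * r2 + D0 * (r1 + r2))"
    unfolding zr by algebra
  also have "\<dots> = al * (a0 * a1 * P01 + a0 * a2 * P02 + a1 * a2 * P12)
     + be * ((l0 * a0) * (l1 * a1) * P01 + (l0 * a0) * (l2 * a2) * P02 + (l1 * a1) * (l2 * a2) * P12)"
    unfolding t01 t02 t12 by algebra
  also have "\<dots> = 0" using H1 H2 by simp
  finally show ?thesis by (rule phi_zero)
qed

lemma o_nz: "o0 \<noteq> 0" "o1 \<noteq> 0" "o2 \<noteq> 0"
proof -
  have N0: "N \<noteq> 0" using N_ge by simp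
  have "mat_mul_vec 3 (mat_pow 3 Ab N) w0 = w0" "mat_mul_vec 3 (mat_pow 3 Ab N) w1 = w1" "mat_mul_vec 3 (mat_pow 3 Ab N) w2 = w2"
    using wv by (simp_all add: AbN mmv_id)
  then have "(\<lambda>i. o0^N * w0 i) = w0" "(\<lambda>i. o1^N * w1 i) = w1" "(\<lambda>i. o2^N * w2 i) = w2"
    using Ab_pow_eig[OF wv(1) we(1)] Ab_pow_eig[OF wv(2) we(2)] Ab_pow_eig[OF wv(3) we(3)] by simp_all
  then show "o0 \<noteq> 0" "o1 \<noteq> 0" "o2 \<noteq> 0" using wnz N0 by (auto simp: zvec_def fun_eq_iff power_0_left)
qed

lemma Mt_eig:
  assumes wv': "w \<in> vecs 3" and we': "mat_mul_vec 3 Ab w = (\<lambda>i. \<omega> * w i)"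
  shows "mat_mul_vec 3 (\<lambda>i j. \<phi> (Mt cc i j)) w = (\<lambda>i. (\<phi> (fst cc) + \<phi> (fst (snd cc)) * \<omega> + \<phi> (snd (snd cc)) * \<omega>^2) * w i)"
proof -
  have eqM: "(\<lambda>i j. \<phi> (Mt cc i j)) = (\<lambda>i j. \<phi> (fst cc) * mat_id 3 i j + \<phi> (fst (snd cc)) * mat_pow 3 Ab 1 i j + \<phi> (snd (snd cc)) * mat_pow 3 Ab 2 i j)"
    using ce_mat_pow[OF ce, of 3 A 1] ce_mat_pow[OF ce, of 3 A 2] ce_mat_id[OF ce, of 3]
    by (simp add: Mt_def ce_add[OF ce] ce_mult[OF ce] fun_eq_iff)
  show ?thesis unfolding eqM mmv_matcomb
    using Ab_pow_eig[OF wv' we', of 1] Ab_pow_eig[OF wv' we', of 2]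
    by (simp add: mmv_id[OF wv'] fun_eq_iff algebra_simps power2_eq_square)
qed

lemma nonscalar_eig:
  assumes ns: "fst (snd (R k)) \<noteq> 0 \<or> snd (snd (R k)) \<noteq> 0"
  shows "o0^k \<noteq> \<phi> d" "o1^k \<noteq> \<phi> d" "o2^k \<noteq> \<phi> d"
proof -
  define cc where "cc = (fst (R k) - d, fst (snd (R k)), snd (snd (R k)))"
  have ccnz: "cc \<noteq> (0, 0, 0)" using ns by (auto simp: cc_def)
  obtain m where m: "Mt cc = mat_pow 3 A m" using Lc_pow[OF ccnz] by blast
  have gen: "\<omega>^k \<noteq> \<phi> d" if wv': "w \<in> vecs 3" and wnz': "w \<noteq> zvec" and we': "mat_mul_vec 3 Ab w = (\<lambda>i. \<omega> * w i)"
    and onz: "\<omega> \<noteq> 0" for w \<omega>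
  proof
    assume eq: "\<omega>^k = \<phi> d"
    have F1: "mat_mul_vec 3 (\<lambda>i j. \<phi> (Mt (R k) i j)) w = (\<lambda>i. \<omega>^k * w i)"
      using Ab_pow_eig[OF wv' we', of k] by (simp add: pow_Mt[symmetric] ce_mat_pow[OF ce])
    have rk: "(\<phi> (fst (R k)) + \<phi> (fst (snd (R k))) * \<omega> + \<phi> (snd (snd (R k))) * \<omega>^2) * w i = \<omega>^k * w i" for i
      using trans[OF fun_cong[OF Mt_eig[OF wv' we', of "R k"], of i, symmetric] fun_cong[OF F1, of i]] by simp
    have F2: "mat_mul_vec 3 (\<lambda>i j. \<phi> (Mt cc i j)) w = (\<lambda>i. \<omega>^m * w i)"
      using Ab_pow_eig[OF wv' we', of m] by (simp add: m ce_mat_pow[OF ce])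
    have "(\<phi> (fst cc) + \<phi> (fst (snd cc)) * \<omega> + \<phi> (snd (snd cc)) * \<omega>^2) * w i = \<omega>^m * w i" for i
      using trans[OF fun_cong[OF Mt_eig[OF wv' we', of cc], of i, symmetric] fun_cong[OF F2, of i]] by simp
    then have "(\<omega>^k - \<phi> d) * w i = \<omega>^m * w i" for i
      using rk[of i] by (simp add: cc_def ce_diff[OF ce] algebra_simps)
    then have "\<omega>^m * w i = 0" for i using eq by simp
    then have "w = zvec" using onz by (simp add: zvec_def fun_eq_iff)
    then show False using wnz' by simp
  qed
  show "o0^k \<noteq> \<phi> d" by (rule gen[OF wv(1) wnz(1) we(1) o_nz(1)])
  show "o1^k \<noteq> \<phi> d" by (rule gen[OF wv(2) wnz(2) we(2) o_nz(2)])
  show "o2^k \<noteq> \<phi> d" by (rule gen[OF wv(3) wnz(3) we(3) o_nz(3)])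
qed

end

definition indep2 :: "('a::field) vect \<Rightarrow> 'a vect \<Rightarrow> bool" where
  "indep2 x y \<longleftrightarrow> (\<forall>a b. (\<lambda>i. a * x i + b * y i) = zvec \<longrightarrow> a = 0 \<and> b = 0)"

lemma pol_comb3: "pol n c x (\<lambda>i. a * y i + b * z i + d * u i) = a * pol n c x y + b * pol n c x z + d * pol n c x (u::('a::comm_ring_1) vect)"
proof -
  have "pol n c x (\<lambda>i. a * y i + b * z i + d * u i) = (\<Sum>i<n. \<Sum>j\<in>{i..<n}. a * (c i j * (x i * y j + y i * x j)) + b * (c i j * (x i * z j + z i * x j)) + d * (c i j * (x i * u j + u i * x j)))"
    unfolding pol_def by (intro sum.cong refl) (simp add: algebra_simps)
  also have "\<dots> = a * pol n c x y + b * pol n c x z + d * pol n c x u"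
    by (simp add: pol_def sum.distrib sum_distrib_left)
  finally show ?thesis .
qed

lemma lin_comb3: "lin c (\<lambda>i. a * x i + b * y i + d * z i) = a * lin c x + b * lin c y + d * lin c (z::('a::comm_ring_1) vect)"
  by (simp add: lin_def algebra_simps)

lemma comb_id1: "(\<lambda>i. 1 * x i + 0 * y i) = (x::('a::comm_ring_1) vect)" by simp
lemma comb_id2: "(\<lambda>i. 0 * x i + 1 * y i) = (y::('a::comm_ring_1) vect)" by simp

lemma NS:
  fixes c :: "('a::field) matr"
  assumes nd: "nondeg 3 c" and x: "x \<in> vecs 3" and y: "y \<in> vecs 3" and ind: "indep2 x y"
    and z: "\<forall>a b. qf 3 c (\<lambda>i. a * x i + b * y i) = 0"
  shows False
proof -
  have fx: "qf 3 c x = 0" using z[rule_format, of 1 0] by simp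
  have fy: "qf 3 c y = 0" using z[rule_format, of 0 1] by simp
  have bxy: "pol 3 c x y = 0" using z[rule_format, of 1 1] qf_comb2[of 3 c 1 x 1 y] fx fy by simp
  have xnz: "x \<noteq> zvec"
  proof
    assume "x = zvec" then have "(\<lambda>i. 1 * x i + 0 * y i) = zvec" by (simp add: zvec_def)
    then have "(1::'a) = 0 \<and> (0::'a) = 0" using ind unfolding indep2_def by blast
    then show False by simp
  qed
  obtain w where w: "w \<in> vecs 3" and bxw: "pol 3 c x w \<noteq> 0"
    using nd x xnz fx unfolding nondeg_def by (auto simp: polar_pol)
  define t where "t = pol 3 c y w / pol 3 c x w"
  define zz where "zz = (\<lambda>i. (- t) * x i + 1 * y i)"
  have zzv: "zz \<in> vecs 3" unfolding zz_def by (rule vecs_comb[OF x y])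
  have zznz: "zz \<noteq> zvec"
  proof
    assume "zz = zvec"
    then have "- t = 0 \<and> (1::'a) = 0" using ind unfolding indep2_def zz_def by blast
    then show False by simp
  qed
  have fzz: "qf 3 c zz = 0" using z unfolding zz_def by blast
  have bzw: "pol 3 c zz w = 0" unfolding zz_def pol_comb1 using bxw by (simp add: t_def)
  have bzx: "pol 3 c zz x = 0" unfolding zz_def pol_comb1 by (simp add: pol_self fx pol_sym[of 3 c y x] bxy)
  have bzy: "pol 3 c zz y = 0" unfolding zz_def pol_comb1 by (simp add: pol_self fy bxy)
  have dnz: "det3 x y w \<noteq> 0"
  proof
    assume "det3 x y w = 0"
    then obtain a b d where abd: "a \<noteq> 0 \<or> b \<noteq> 0 \<or> d \<noteq> 0" and e: "(\<lambda>i. a * x i + b * y i + d * w i) = zvec"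
      using det3_zero_dep[OF _ x y w] by blast
    have "pol 3 c x (\<lambda>i. a * x i + b * y i + d * w i) = 0" using e by (simp add: pol_def zvec_def)
    then have "d * pol 3 c x w = 0" by (simp add: pol_comb3 pol_self fx bxy)
    then have d0: "d = 0" using bxw by simp
    then have "(\<lambda>i. a * x i + b * y i) = zvec" using e by simp
    then have "a = 0 \<and> b = 0" using ind unfolding indep2_def by blast
    then show False using abd d0 by simp
  qed
  obtain w' where w': "w' \<in> vecs 3" and bzw': "pol 3 c zz w' \<noteq> 0"
    using nd zzv zznz fzz unfolding nondeg_def by (auto simp: polar_pol)
  have "w' = (\<lambda>i. (det3 w' y w / det3 x y w) * x i + (det3 x w' w / det3 x y w) * y i + (det3 x y w' / det3 x y w) * w i)"
    by (rule cramer[OF dnz w' x y w])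
  then have "pol 3 c zz w' = pol 3 c zz (\<lambda>i. (det3 w' y w / det3 x y w) * x i + (det3 x w' w / det3 x y w) * y i + (det3 x y w' / det3 x y w) * w i)"
    by (rule arg_cong)
  also have "\<dots> = (det3 w' y w / det3 x y w) * pol 3 c zz x + (det3 x w' w / det3 x y w) * pol 3 c zz y + (det3 x y w' / det3 x y w) * pol 3 c zz w"
    by (rule pol_comb3)
  finally have "pol 3 c zz w' = (det3 w' y w / det3 x y w) * pol 3 c zz x + (det3 x w' w / det3 x y w) * pol 3 c zz y + (det3 x y w' / det3 x y w) * pol 3 c zz w" .
  then show False using bzw' bzx bzy bzw by simp
qed

lemma span2_mem: "x \<in> span2 g h \<longleftrightarrow> (\<exists>a b. x = (\<lambda>i. a * g i + b * h i))"
  by (auto simp: span2_def)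

lemma span2_closed: "x \<in> span2 g h \<Longrightarrow> y \<in> span2 g h \<Longrightarrow> (\<lambda>i. s * x i + t * y i) \<in> span2 g (h::('a::comm_ring_1) vect)"
proof -
  assume "x \<in> span2 g h" "y \<in> span2 g h"
  then obtain a b a' b' where x: "x = (\<lambda>i. a * g i + b * h i)" and y: "y = (\<lambda>i. a' * g i + b' * h i)"
    by (auto simp: span2_mem)
  have "(\<lambda>i. s * x i + t * y i) = (\<lambda>i. (s * a + t * a') * g i + (s * b + t * b') * h i)"
    unfolding x y by (simp add: fun_eq_iff algebra_simps)
  then show ?thesis by (auto simp: span2_mem)
qed

lemma span2_gen: "g \<in> span2 g (h::('a::comm_ring_1) vect)" "h \<in> span2 g h"
  unfolding span2_mem by (rule exI[of _ 1], rule exI[of _ 0], simp) (rule exI[of _ 0], rule exI[of _ 1], simp)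

lemma span2_zvec: "zvec \<in> span2 g (h::('a::comm_ring_1) vect)"
  by (auto simp: span2_mem zvec_def intro!: exI[of _ 0])

lemma span2_vecs: "g \<in> vecs n \<Longrightarrow> h \<in> vecs n \<Longrightarrow> x \<in> span2 g h \<Longrightarrow> x \<in> vecs n"
  by (auto simp: span2_mem vecs_def)

lemma span2_image: "mat_mul_vec n M ` span2 g h = span2 (mat_mul_vec n M g) (mat_mul_vec n M (h::('a::comm_ring_1) vect))"
proof (intro set_eqI iffI)
  fix x assume "x \<in> mat_mul_vec n M ` span2 g h"
  then obtain a b where "x = mat_mul_vec n M (\<lambda>i. a * g i + b * h i)" by (auto simp: span2_def)
  then show "x \<in> span2 (mat_mul_vec n M g) (mat_mul_vec n M h)"
    unfolding span2_mem by (rule_tac exI[of _ a], rule_tac exI[of _ b]) (simp add: mmv_comb)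
next
  fix x assume "x \<in> span2 (mat_mul_vec n M g) (mat_mul_vec n M h)"
  then obtain a b where "x = (\<lambda>i. a * mat_mul_vec n M g i + b * mat_mul_vec n M h i)" by (auto simp: span2_def)
  then have "x = mat_mul_vec n M (\<lambda>i. a * g i + b * h i)" by (simp add: mmv_comb)
  moreover have "(\<lambda>i. a * g i + b * h i) \<in> span2 g h" by (auto simp: span2_def)
  ultimately show "x \<in> mat_mul_vec n M ` span2 g h" by blast
qed

lemma span2_swap: "span2 g h = span2 h g"
  by (auto simp: span2_def) (metis add.commute)+

lemma lines4E:
  assumes "L \<in> lines4"
  obtains g h where "L = span2 g h" "g \<in> vecs 4" "h \<in> vecs 4" "indep2 g h"
  using assms unfolding lines4_def indep2_def by blast

lemma span2_eq:
  fixes g h x y :: "('a::field) vect"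
  assumes x: "x \<in> span2 g h" and y: "y \<in> span2 g h" and ind: "indep2 x y"
  shows "span2 g h = span2 x y"
proof
  show "span2 x y \<subseteq> span2 g h"
    using span2_closed[OF x y] by (auto simp: span2_mem)
  obtain a1 b1 a2 b2 where xe: "x = (\<lambda>i. a1 * g i + b1 * h i)" and ye: "y = (\<lambda>i. a2 * g i + b2 * h i)"
    using x y by (auto simp: span2_mem)
  have dnz: "a1 * b2 - a2 * b1 \<noteq> 0"
  proof
    assume d: "a1 * b2 - a2 * b1 = 0"
    have "(\<lambda>i. b2 * x i + (- b1) * y i) = zvec"
      unfolding xe ye zvec_def using d by (simp add: fun_eq_iff algebra_simps)
    then have "b2 = 0 \<and> - b1 = 0" using ind unfolding indep2_def by blast
    then have b: "b2 = 0 \<and> b1 = 0" by simp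
    have "(\<lambda>i. a2 * x i + (- a1) * y i) = zvec"
      unfolding xe ye zvec_def using b by (simp add: fun_eq_iff algebra_simps)
    then have "a2 = 0 \<and> - a1 = 0" using ind unfolding indep2_def by blast
    then have a: "a2 = 0 \<and> a1 = 0" by simp
    have "(\<lambda>i. 1 * x i + 0 * y i) = zvec" unfolding xe using a b by (simp add: zvec_def)
    then have "(1::'a) = 0 \<and> (0::'a) = 0" using ind unfolding indep2_def by blast
    then show False by simp
  qed
  define dd where "dd = a1 * b2 - a2 * b1"
  have dnz': "dd \<noteq> 0" using dnz by (simp add: dd_def)
  have ge: "g = (\<lambda>i. (b2 / dd) * x i + (- b1 / dd) * y i)"
  proof (rule ext)
    fix i
    have "dd * g i = b2 * x i + (- b1) * y i" unfolding xe ye dd_def by (simp add: algebra_simps)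
    then show "g i = (b2 / dd) * x i + (- b1 / dd) * y i" using dnz' by (simp add: field_simps)
  qed
  have he: "h = (\<lambda>i. (- a2 / dd) * x i + (a1 / dd) * y i)"
  proof (rule ext)
    fix i
    have "dd * h i = (- a2) * x i + a1 * y i" unfolding xe ye dd_def by (simp add: algebra_simps)
    then show "h i = (- a2 / dd) * x i + (a1 / dd) * y i" using dnz' by (simp add: field_simps)
  qed
  have "g \<in> span2 x y" "h \<in> span2 x y" unfolding span2_mem by (rule exI, rule exI, rule ge) (rule exI, rule exI, rule he)
  then show "span2 g h \<subseteq> span2 x y"
    using span2_closed by (auto simp: span2_mem[of _ g h])
qed

lemma lines_eq:
  assumes "L1 \<in> lines4" "L2 \<in> lines4" "x \<in> L1" "y \<in> L1" "x \<in> L2" "y \<in> L2" "indep2 x y"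
  shows "L1 = L2"
proof -
  obtain g h where "L1 = span2 g h" using assms(1) by (rule lines4E)
  moreover obtain g' h' where "L2 = span2 g' h'" using assms(2) by (rule lines4E)
  ultimately show ?thesis using span2_eq assms by metis
qed

lemma indep_ext: "p \<in> vecs 3 \<Longrightarrow> p \<noteq> zvec \<Longrightarrow> indep2 (ext p 0) (ext u (1::'a::field))"
  unfolding indep2_def
proof (intro allI impI)
  fix a b assume pv: "p \<in> vecs 3" and p: "p \<noteq> zvec" and z: "(\<lambda>i. a * ext p 0 i + b * ext u 1 i) = zvec"
  have b: "b = 0" using fun_cong[OF z, of 3] by (simp add: zvec_def)
  obtain j where j: "p j \<noteq> 0" using p by (auto simp: zvec_def fun_eq_iff)
  have "a * ext p 0 j = 0" using fun_cong[OF z, of j] b by (simp add: zvec_def)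
  moreover have "j \<noteq> 3 \<Longrightarrow> ext p 0 j = p j" by (simp add: ext_def)
  ultimately have "j \<noteq> 3 \<Longrightarrow> a = 0" using j by simp
  moreover have "j = 3 \<Longrightarrow> a = 0"
  proof -
    assume "j = 3" then show "a = 0" using j pv by (simp add: vecs_def)
  qed
  ultimately show "a = 0 \<and> b = 0" using b by blast
qed

lemma vecs3_4: "x \<in> vecs 3 \<Longrightarrow> x \<in> vecs 4" by (auto simp: vecs_def)

lemma qf4_vecs3: "x \<in> vecs 3 \<Longrightarrow> qf 4 c x = qf 3 c (x::('a::comm_ring_1) vect)"
  using qf_ext[of x c 0] ext0[of x] by simp

lemma LS1:
  fixes g h :: "('a::field) vect"
  assumes g: "g \<in> vecs 4" and h: "h \<in> vecs 4" and ind: "indep2 g h" and h3: "h 3 \<noteq> 0"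
  shows "\<exists>p u. p \<in> vecs 3 \<and> p \<noteq> zvec \<and> u \<in> vecs 3 \<and> ext p 0 \<in> span2 g h \<and> ext u 1 \<in> span2 g h"
proof -
  define p where "p = (\<lambda>i. 1 * g i + (- (g 3 / h 3)) * h i)"
  define u' where "u' = (\<lambda>i. 0 * g i + (1 / h 3) * h i)"
  have p4: "p \<in> vecs 4" unfolding p_def by (rule vecs_comb[OF g h])
  have p3: "p 3 = 0" using h3 by (simp add: p_def)
  have pv: "p \<in> vecs 3" by (rule vecs4_3[OF p4 p3])
  have pnz: "p \<noteq> zvec"
  proof
    assume "p = zvec"
    then have "(1::'a) = 0 \<and> - (g 3 / h 3) = 0" using ind unfolding indep2_def p_def by blast
    then show False by simp
  qed
  have "p \<in> span2 g h" unfolding p_def span2_mem by blast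
  then have pL: "ext p 0 \<in> span2 g h" using ext0[OF pv] by simp
  have u4: "u' \<in> vecs 4" unfolding u'_def by (rule vecs_comb[OF g h])
  have u3: "u' 3 = 1" using h3 by (simp add: u'_def)
  obtain uu where "u' = ext uu (u' 3)" "uu \<in> vecs 3" using vecs4_ext[OF u4] by blast
  then have ue: "u' = ext uu 1" and uv: "uu \<in> vecs 3" using u3 by simp_all
  have uL: "ext uu 1 \<in> span2 g h" unfolding ue[symmetric] u'_def span2_mem by blast
  show ?thesis using pv pnz uv pL uL by blast
qed

lemma line_struct:
  fixes c :: "('a::field) matr"
  assumes L: "L \<in> lines4" and on: "\<forall>v\<in>L. qf 4 c v = 0" and nd: "nondeg 3 c"
  shows "\<exists>p u. p \<in> vecs 3 \<and> p \<noteq> zvec \<and> u \<in> vecs 3 \<and> ext p 0 \<in> L \<and> ext u 1 \<in> L"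
proof -
  obtain g h where Le: "L = span2 g h" and g: "g \<in> vecs 4" and h: "h \<in> vecs 4" and ind: "indep2 g h"
    using L by (rule lines4E)
  consider "h 3 \<noteq> 0" | "g 3 \<noteq> 0" | "g 3 = 0 \<and> h 3 = 0" by blast
  then show ?thesis
  proof cases
    case 1 then show ?thesis using LS1[OF g h ind] Le by blast
  next
    case 2
    have ind': "indep2 h g" using ind unfolding indep2_def by (metis (no_types, lifting) add.commute ext)
    show ?thesis using LS1[OF h g ind' 2] Le span2_swap by metis
  next
    case 3
    have g3: "g \<in> vecs 3" and h3: "h \<in> vecs 3" using vecs4_3 g h 3 by auto
    have "\<forall>a b. qf 3 c (\<lambda>i. a * g i + b * h i) = 0"
    proof (intro allI)
      fix a b
      have "(\<lambda>i. a * g i + b * h i) \<in> L" unfolding Le span2_mem by blast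
      then have "qf 4 c (\<lambda>i. a * g i + b * h i) = 0" using on by blast
      then show "qf 3 c (\<lambda>i. a * g i + b * h i) = 0" using qf4_vecs3[OF vecs_comb[OF g3 h3]] by simp
    qed
    then show ?thesis using NS[OF nd g3 h3 ind] by blast
  qed
qed

lemma line_eqs:
  fixes c :: "('a::field) matr"
  assumes P: "ext p 0 \<in> span2 g h" and U: "ext u 1 \<in> span2 g h" and on: "\<forall>v\<in>span2 g h. qf 4 c v = 0"
    and p: "p \<in> vecs 3" and u: "u \<in> vecs 3"
  shows "qf 3 c p = 0" "pol 3 c p u + lin c p = 0" "qf 3 c u + lin c u + c 3 3 = 0"
proof -
  have e1: "qf 4 c (ext p 0) = 0" "qf 4 c (ext u 1) = 0" using P U on by auto
  have "(\<lambda>i. 1 * ext p 0 i + 1 * ext u 1 i) = ext (\<lambda>i. p i + u i) 1" by (simp add: ext_def fun_eq_iff)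
  with span2_closed[OF P U, of 1 1] have "ext (\<lambda>i. p i + u i) 1 \<in> span2 g h" by simp
  then have e3: "qf 4 c (ext (\<lambda>i. p i + u i) 1) = 0" using on by blast
  have pu: "(\<lambda>i. p i + u i) \<in> vecs 3" using p u by (simp add: vecs_def)
  have e2: "qf 3 c (\<lambda>i. p i + u i) + lin c (\<lambda>i. p i + u i) + c 3 3 = 0"
    using e3 qf_ext[OF pu, of c 1] by simp
  show f1: "qf 3 c p = 0" using e1 qf_ext[OF p, of c 0] by simp
  show f3: "qf 3 c u + lin c u + c 3 3 = 0" using e1 qf_ext[OF u, of c 1] by simp
  show "pol 3 c p u + lin c p = 0" using e2 f1 f3 qf_comb2[of 3 c 1 p 1 u] lin_comb[of c 1 p 1 u] by simp algebra
qed

context eigs begin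

lemma main_meet:
  assumes nd: "nondeg 3 c" and a: "c 3 3 \<noteq> 0"
    and L1: "L1 \<in> lines4" and on1: "\<forall>v\<in>L1. qf 4 c v = 0"
    and on2: "\<forall>v\<in>mat_mul_vec 4 (blk (mat_pow 3 A k)) ` L1. qf 4 c v = 0"
  shows "\<exists>X. X \<noteq> zvec \<and> X \<in> L1 \<and> X \<in> mat_mul_vec 4 (blk (mat_pow 3 A k)) ` L1"
proof -
  let ?G = "mat_mul_vec 4 (blk (mat_pow 3 A k))"
  obtain p u where p: "p \<in> vecs 3" and pnz: "p \<noteq> zvec" and u: "u \<in> vecs 3" and P: "ext p 0 \<in> L1" and U: "ext u 1 \<in> L1"
    using line_struct[OF L1 on1 nd] by blast
  obtain g h where Le: "L1 = span2 g h" using L1 by (rule lines4E)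
  have L2e: "?G ` L1 = span2 (?G g) (?G h)" unfolding Le by (rule span2_image)
  have GP: "?G (ext p 0) = ext (ap k p) 0" by (rule mmv_blk[OF p])
  have GU: "?G (ext u 1) = ext (ap k u) 1" by (rule mmv_blk[OF u])
  have P2: "ext (ap k p) 0 \<in> span2 (?G g) (?G h)" using P GP L2e by (metis imageI)
  have U2: "ext (ap k u) 1 \<in> span2 (?G g) (?G h)" using U GU L2e by (metis imageI)
  note E1 = line_eqs[OF P[unfolded Le] U[unfolded Le] on1[unfolded Le] p u]
  note E2 = line_eqs[OF P2 U2 on2[unfolded L2e] ap_vecs ap_vecs]
  have Bpnz: "ap k p \<noteq> zvec" by (rule ap_nz[OF p pnz])
  show ?thesis
  proof (cases "fst (snd (R k)) = 0 \<and> snd (snd (R k)) = 0")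
    case True
    have Bp: "ap k p = (\<lambda>i. fst (R k) * p i)" using ap_Lc[OF p, of k] True by (simp add: Lc_def)
    have "ext (ap k p) 0 = (\<lambda>i. fst (R k) * ext p 0 i + 0 * ext u 1 i)"
      unfolding Bp by (simp add: ext_def fun_eq_iff)
    then have X1: "ext (ap k p) 0 \<in> L1" using span2_closed[OF P[unfolded Le] U[unfolded Le], of "fst (R k)" 0] Le by simp
    have Xnz: "ext (ap k p) 0 \<noteq> zvec"
    proof
      assume "ext (ap k p) 0 = zvec"
      then have "ext (ap k p) 0 = ext zvec 0" by (simp add: ext_def zvec_def fun_eq_iff)
      then show False using Bpnz ext_inj[OF ap_vecs, of zvec] by (simp add: vecs_def zvec_def)
    qed
    show ?thesis using X1 Xnz P2 L2e by auto
  next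
    case False
    then have ns: "fst (snd (R k)) \<noteq> 0 \<or> snd (snd (R k)) \<noteq> 0" by blast
    have noeig: "x = zvec" if xv: "x \<in> vecs 3" and ex: "ap k x = (\<lambda>i. d * x i)" for x d
    proof -
      have "Lc (fst (R k) - d, fst (snd (R k)), snd (snd (R k))) x = zvec"
        using ex ap_Lc[OF xv, of k] by (auto simp: Lc_def zvec_def fun_eq_iff algebra_simps)
      then show ?thesis by (rule Lc_inj[rotated, OF xv]) (use ns in auto)
    qed
    have ind: "indep2 p (ap k p)"
      unfolding indep2_def
    proof (intro allI impI)
      fix s t assume z: "(\<lambda>i. s * p i + t * ap k p i) = zvec"
      show "s = 0 \<and> t = 0"
      proof (cases "t = 0")
        case True
        then have "(\<lambda>i. s * p i) = zvec" using z by simp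
        then have "s = 0" using pnz by (auto simp: zvec_def fun_eq_iff)
        then show ?thesis using True by simp
      next
        case False
        have "ap k p = (\<lambda>i. (- s / t) * p i)"
          using z False by (auto simp: zvec_def fun_eq_iff field_simps) (metis add.commute add_eq_0_iff2 mult.commute)
        then have "p = zvec" by (rule noeig[OF p])
        then show ?thesis using pnz by simp
      qed
    qed
    show ?thesis
    proof (cases "det3 p (ap k p) u = 0")
      case True
      obtain al be ga where abg: "al \<noteq> 0 \<or> be \<noteq> 0 \<or> ga \<noteq> 0" and z: "(\<lambda>i. al * p i + be * ap k p i + ga * u i) = zvec"
        using det3_zero_dep[OF True p ap_vecs u] by blast
      have ga: "ga \<noteq> 0"
      proof
        assume "ga = 0"
        then have "(\<lambda>i. al * p i + be * ap k p i) = zvec" using z by simp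
        then show False using ind abg \<open>ga = 0\<close> unfolding indep2_def by blast
      qed
      define e0 e1 where "e0 = - al / ga" and "e1 = - be / ga"
      have ue: "u = (\<lambda>i. e0 * p i + e1 * ap k p i)"
        using z ga by (auto simp: e0_def e1_def zvec_def fun_eq_iff field_simps) (metis add.commute add_eq_0_iff2 mult.commute)
      have Bu: "ap k u = (\<lambda>i. e0 * ap k p i + e1 * ap k (ap k p) i)"
        unfolding ue by (rule mmv_comb)
      have k2: "pol 3 c (ap k p) (ap k (ap k p)) = 0" by (rule KI2[OF p E1(1) E2(1)])
      have fu: "qf 3 c u = e0 * e1 * pol 3 c p (ap k p)"
        unfolding ue qf_comb2 using E1(1) E2(1) by simp
      have lu: "lin c u = e0 * lin c p + e1 * lin c (ap k p)" unfolding ue by (rule lin_comb)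
      have bpu: "pol 3 c p u = e1 * pol 3 c p (ap k p)"
        unfolding ue pol_comb using E1(1) by (simp add: pol_self)
      have bBu: "pol 3 c (ap k p) (ap k u) = e1 * pol 3 c (ap k p) (ap k (ap k p))"
        unfolding Bu pol_comb using E2(1) by (simp add: pol_self)
      have "c 3 3 = 0"
        using E1(2) E1(3) E2(2) fu lu bpu bBu k2 by algebra
      then show ?thesis using a by simp
    next
      case False
      have Buv: "ap k u \<in> vecs 3" by (rule ap_vecs)
      define d0 d1 d2 where "d0 = det3 (ap k u) (ap k p) u / det3 p (ap k p) u"
        and "d1 = det3 p (ap k u) u / det3 p (ap k p) u" and "d2 = det3 p (ap k p) (ap k u) / det3 p (ap k p) u"
      have Bu: "ap k u = (\<lambda>i. d0 * p i + d1 * ap k p i + d2 * u i)"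
        unfolding d0_def d1_def d2_def by (rule cramer[OF False Buv p ap_vecs u])
      have k1: "d2 * qf 3 c u + d0 * pol 3 c p u = 0"
        by (rule KI1[OF p u E1(1) E2(1) Bu nonscalar_eig[OF ns]])
      have fBu: "qf 3 c (ap k u) = d0^2 * qf 3 c p + d1^2 * qf 3 c (ap k p) + d2^2 * qf 3 c u
          + d0 * d1 * pol 3 c p (ap k p) + d0 * d2 * pol 3 c p u + d1 * d2 * pol 3 c (ap k p) u"
        unfolding Bu by (rule qf_comb3)
      have lBu: "lin c (ap k u) = d0 * lin c p + d1 * lin c (ap k p) + d2 * lin c u"
        unfolding Bu by (rule lin_comb3)
      have bBu: "pol 3 c (ap k p) (ap k u) = d0 * pol 3 c p (ap k p) + d2 * pol 3 c (ap k p) u"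
        unfolding Bu pol_comb3 using E2(1) by (simp add: pol_self pol_sym[of 3 c "ap k p" p])
      have "c 3 3 * (1 - d2) = 0"
        using E1 E2 k1 fBu lBu bBu by algebra
      then have d2: "d2 = 1" using a by simp
      have X1: "ext (\<lambda>i. d0 * p i + 1 * u i) (d0 * 0 + 1 * 1) \<in> L1"
        using span2_closed[OF P[unfolded Le] U[unfolded Le], of d0 1] Le by (simp only: ext_comb)
      have X2: "ext (\<lambda>i. (- d1) * ap k p i + 1 * ap k u i) ((- d1) * 0 + 1 * 1) \<in> span2 (?G g) (?G h)"
        using span2_closed[OF P2 U2, of "- d1" 1] by (simp only: ext_comb)
      have eqX: "(\<lambda>i. (- d1) * ap k p i + 1 * ap k u i) = (\<lambda>i. d0 * p i + 1 * u i)"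
        using Bu d2 by (simp add: fun_eq_iff)
      have Xnz: "ext (\<lambda>i. d0 * p i + 1 * u i) (d0 * 0 + 1 * 1) \<noteq> zvec"
        by (auto simp: zvec_def fun_eq_iff intro!: exI[of _ 3])
      show ?thesis using X1 X2 eqX Xnz L2e by auto
    qed
  qed
qed

end

lemma solve_lin: "a * x + b * y = 0 \<Longrightarrow> b \<noteq> 0 \<Longrightarrow> y = (- a / b) * (x::'a::field)"
proof -
  assume h: "a * x + b * y = 0" and b: "b \<noteq> 0"
  have "b * y = - (a * x)" using h by (simp add: eq_neg_iff_add_eq_0 add.commute)
  then show ?thesis using b by (simp add: field_simps)
qed
lemma solve_lin3: "a * x + b * y + d * z = 0 \<Longrightarrow> a \<noteq> 0 \<Longrightarrow> x = (- b / a) * y + (- d / a) * (z::'a::field)"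
proof -
  assume h: "a * x + b * y + d * z = 0" and a: "a \<noteq> 0"
  have "a * x = - (b * y + d * z)" using eq_neg_iff_add_eq_0[of "a * x" "b * y + d * z"] h by (simp only: add.assoc)
  then show ?thesis using a by (simp add: field_simps)
qed

lemma span2_closed3: "x \<in> span2 g h \<Longrightarrow> y \<in> span2 g h \<Longrightarrow> z \<in> span2 g h \<Longrightarrow> (\<lambda>i. a * x i + b * y i + d * z i) \<in> span2 g (h::('a::comm_ring_1) vect)"
proof -
  assume xyz: "x \<in> span2 g h" "y \<in> span2 g h" "z \<in> span2 g h"
  have "(\<lambda>i. 1 * (\<lambda>i. a * x i + b * y i) i + d * z i) \<in> span2 g h"
    by (rule span2_closed[OF span2_closed[OF xyz(1,2)] xyz(3)])
  then show ?thesis by simp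
qed

lemma on_pol: "x \<in> span2 g h \<Longrightarrow> y \<in> span2 g h \<Longrightarrow> \<forall>v\<in>span2 g h. qf n c v = 0 \<Longrightarrow> pol n c x (y::('a::comm_ring_1) vect) = 0"
proof -
  assume x: "x \<in> span2 g h" and y: "y \<in> span2 g h" and on: "\<forall>v\<in>span2 g h. qf n c v = 0"
  have "qf n c (\<lambda>i. 1 * x i + 1 * y i) = 0" using span2_closed[OF x y] on by blast
  then show ?thesis using qf_comb2[of n c 1 x 1 y] on x y by simp
qed

lemma lines_on_E:
  assumes "L \<in> lines4" obtains g h where "L = span2 g h" "g \<in> vecs 4" "h \<in> vecs 4"
  using assms by (rule lines4E)

lemma ext_nz: "p \<in> vecs 3 \<Longrightarrow> p \<noteq> zvec \<Longrightarrow> ext p t \<noteq> (zvec::('a::zero) vect)"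
proof
  assume p: "p \<in> vecs 3" "p \<noteq> zvec" and e: "ext p t = zvec"
  have "p i = 0" for i
  proof (cases "i < 3")
    case True then show ?thesis using fun_cong[OF e, of i] by (simp add: zvec_def)
  next
    case False then show ?thesis using p(1) by (simp add: vecs_def)
  qed
  then show False using p(2) by (simp add: zvec_def fun_eq_iff)
qed

lemma nz_of_3: "X 3 \<noteq> 0 \<Longrightarrow> X \<noteq> (zvec::('a::zero) vect)" by (auto simp: zvec_def)

lemma RC:
  fixes c :: "('a::field) matr"
  assumes nd: "nondeg 3 c"
    and L0: "L0 \<in> lines4" and L1: "L1 \<in> lines4" and L2: "L2 \<in> lines4"
    and on0: "\<forall>v\<in>L0. qf 4 c v = 0" and on1: "\<forall>v\<in>L1. qf 4 c v = 0" and on2: "\<forall>v\<in>L2. qf 4 c v = 0"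
    and ne: "L1 \<noteq> L2" and Xnz: "X \<noteq> zvec" and X1: "X \<in> L1" and X2: "X \<in> L2"
    and s1: "L0 \<inter> L1 = {zvec}" and s2: "L0 \<inter> L2 = {zvec}"
  shows False
proof -
  obtain g0 h0 where L0e: "L0 = span2 g0 h0" using L0 by (rule lines4E)
  obtain g1 h1 where L1e: "L1 = span2 g1 h1" and g1: "g1 \<in> vecs 4" and h1: "h1 \<in> vecs 4" using L1 by (rule lines4E)
  obtain g2 h2 where L2e: "L2 = span2 g2 h2" using L2 by (rule lines4E)
  obtain p0 u0 where p0: "p0 \<in> vecs 3" "p0 \<noteq> zvec" and u0: "u0 \<in> vecs 3" and P0: "ext p0 0 \<in> L0" and U0: "ext u0 1 \<in> L0"
    using line_struct[OF L0 on0 nd] by blast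
  obtain p1 u1 where p1: "p1 \<in> vecs 3" "p1 \<noteq> zvec" and u1: "u1 \<in> vecs 3" and P1: "ext p1 0 \<in> L1" and U1: "ext u1 1 \<in> L1"
    using line_struct[OF L1 on1 nd] by blast
  obtain p2 u2 where p2: "p2 \<in> vecs 3" "p2 \<noteq> zvec" and u2: "u2 \<in> vecs 3" and P2: "ext p2 0 \<in> L2" and U2: "ext u2 1 \<in> L2"
    using line_struct[OF L2 on2 nd] by blast
  have X4: "X \<in> vecs 4" using span2_vecs[OF g1 h1] X1 L1e by blast
  obtain x where xv: "x \<in> vecs 3" and Xe: "X = ext x (X 3)" using vecs4_ext[OF X4] by metis
  have in0: "Y \<in> L0 \<Longrightarrow> Y \<noteq> zvec \<Longrightarrow> Y \<in> L1 \<Longrightarrow> False" "Y \<in> L0 \<Longrightarrow> Y \<noteq> zvec \<Longrightarrow> Y \<in> L2 \<Longrightarrow> False" for Y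
    using s1 s2 by blast+
  note cl0 = span2_closed[OF P0[unfolded L0e] U0[unfolded L0e]]
  have on0': "\<forall>v\<in>span2 g0 h0. qf 4 c v = 0" using on0 L0e by simp
  have on1': "\<forall>v\<in>span2 g1 h1. qf 4 c v = 0" using on1 L1e by simp
  have on2': "\<forall>v\<in>span2 g2 h2. qf 4 c v = 0" using on2 L2e by simp
  have NSp: False if "indep2 y z" "y \<in> vecs 3" "z \<in> vecs 3" "\<forall>a b. qf 4 c (ext (\<lambda>i. a * y i + b * z i) 0) = 0" for y z
  proof -
    have "\<forall>a b. qf 3 c (\<lambda>i. a * y i + b * z i) = 0"
    proof (intro allI)
      fix a b
      show "qf 3 c (\<lambda>i. a * y i + b * z i) = 0"
        using that(4)[rule_format, of a b] qf_ext[of "\<lambda>i. a * y i + b * z i" c 0] vecs_comb[OF that(2,3), of a b] by simp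
    qed
    then show False using NS[OF nd that(2,3,1)] by blast
  qed
  show False
  proof (cases "X 3 = 0")
    case False
    define t where "t = X 3"
    define x' where "x' = (\<lambda>i. (1 / t) * x i)"
    have x'v: "x' \<in> vecs 3" unfolding x'_def by (rule vecs_smult[OF xv])
    have X'e: "ext x' 1 = (\<lambda>i. (1 / t) * X i + 0 * X i)"
      using False unfolding x'_def t_def by (subst Xe) (simp add: ext_def fun_eq_iff)
    have X'1: "ext x' 1 \<in> L1" unfolding X'e using span2_closed[OF X1[unfolded L1e] X1[unfolded L1e], of "1 / t" 0] L1e by simp
    have X'2: "ext x' 1 \<in> L2" unfolding X'e using span2_closed[OF X2[unfolded L2e] X2[unfolded L2e], of "1 / t" 0] L2e by simp
    have ind12: "indep2 p1 p2"
      unfolding indep2_def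
    proof (intro allI impI)
      fix a b assume z: "(\<lambda>i. a * p1 i + b * p2 i) = zvec"
      show "a = 0 \<and> b = 0"
      proof (cases "b = 0")
        case True
        then have "(\<lambda>i. a * p1 i) = zvec" using z by simp
        then show ?thesis using True p1(2) by (auto simp: zvec_def fun_eq_iff)
      next
        case bnz: False
        have "ext p2 0 = (\<lambda>i. (- a / b) * ext p1 0 i + 0 * ext u1 1 i)"
        proof (rule ext)
          fix i
          have "a * p1 i + b * p2 i = 0" using fun_cong[OF z, of i] by (simp add: zvec_def)
          then have "p2 i = (- a / b) * p1 i" using bnz by (rule solve_lin)
          then show "ext p2 0 i = (- a / b) * ext p1 0 i + 0 * ext u1 1 i" by (simp add: ext_def)
        qed
        then have "ext p2 0 \<in> L1" using span2_closed[OF P1[unfolded L1e] U1[unfolded L1e], of "- a / b" 0] L1e by simp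
        then have "L1 = L2" using lines_eq[OF L1 L2 _ X'1 P2 X'2 indep_ext[OF p2]] by blast
        then show ?thesis using ne by simp
      qed
    qed
    have fX: "qf 4 c (ext x' 1) = 0" "qf 4 c (ext p1 0) = 0" "qf 4 c (ext p2 0) = 0" using X'1 P1 P2 on1 on2 by auto
    have bX1: "pol 4 c (ext x' 1) (ext p1 0) = 0" using on_pol[OF X'1[unfolded L1e] P1[unfolded L1e] on1'] .
    have bX2: "pol 4 c (ext x' 1) (ext p2 0) = 0" using on_pol[OF X'2[unfolded L2e] P2[unfolded L2e] on2'] .
    have b12: "pol 4 c (ext p1 0) (ext p2 0) = pol 3 c p1 p2" using pol_ext[OF p1(1) p2(1), of c 0 0] by simp
    have f1: "qf 3 c p1 = 0" "qf 3 c p2 = 0" using fX qf_ext[OF p1(1), of c 0] qf_ext[OF p2(1), of c 0] by simp_all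
    have bnz: "pol 3 c p1 p2 \<noteq> 0"
    proof
      assume b0: "pol 3 c p1 p2 = 0"
      have "\<forall>a b. qf 4 c (ext (\<lambda>i. a * p1 i + b * p2 i) 0) = 0"
      proof (intro allI)
        fix a b
        show "qf 4 c (ext (\<lambda>i. a * p1 i + b * p2 i) 0) = 0"
          using qf_ext[of "\<lambda>i. a * p1 i + b * p2 i" c 0] vecs_comb[OF p1(1) p2(1), of a b] qf_comb2[of 3 c a p1 b p2] f1 b0 by simp
      qed
      then show False using NSp[OF ind12 p1(1) p2(1)] by blast
    qed
    show False
    proof (cases "det3 p0 p1 p2 = 0")
      case True
      obtain a0 a1 a2 where aa: "a0 \<noteq> 0 \<or> a1 \<noteq> 0 \<or> a2 \<noteq> 0" and z: "(\<lambda>i. a0 * p0 i + a1 * p1 i + a2 * p2 i) = zvec"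
        using det3_zero_dep[OF True p0(1) p1(1) p2(1)] by blast
      have a0: "a0 \<noteq> 0"
      proof
        assume "a0 = 0"
        then have "(\<lambda>i. a1 * p1 i + a2 * p2 i) = zvec" using z by simp
        then show False using ind12 aa \<open>a0 = 0\<close> unfolding indep2_def by blast
      qed
      define c1 c2 where "c1 = - a1 / a0" and "c2 = - a2 / a0"
      have P0e: "ext p0 0 = (\<lambda>i. c1 * ext p1 0 i + c2 * ext p2 0 i)"
      proof (rule ext)
        fix i
        have "a0 * p0 i + a1 * p1 i + a2 * p2 i = 0" using fun_cong[OF z, of i] by (simp add: zvec_def)
        then have "p0 i = c1 * p1 i + c2 * p2 i" unfolding c1_def c2_def using a0 by (rule solve_lin3)
        then show "ext p0 0 i = c1 * ext p1 0 i + c2 * ext p2 0 i" by (simp add: ext_def)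
      qed
      have "qf 4 c (ext p0 0) = 0" using P0 on0 by blast
      then have "c1 * c2 * pol 3 c p1 p2 = 0" unfolding P0e qf_comb2 using fX b12 by simp
      then have "c1 = 0 \<or> c2 = 0" using bnz by simp
      moreover have "ext p0 0 \<noteq> zvec" using p0 ext_inj[OF p0(1), of zvec 0 0] by (auto simp: ext_def zvec_def vecs_def fun_eq_iff)
      moreover have "c1 = 0 \<Longrightarrow> ext p0 0 \<in> L2" unfolding P0e using span2_closed[OF P2[unfolded L2e] P2[unfolded L2e], of c2 0] L2e by simp
      moreover have "c2 = 0 \<Longrightarrow> ext p0 0 \<in> L1" unfolding P0e using span2_closed[OF P1[unfolded L1e] P1[unfolded L1e], of c1 0] L1e by simp
      ultimately show False using in0 P0 by blast
    next
      case dnz: False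
      define w where "w = (\<lambda>i. 1 * x' i + (- 1) * u0 i)"
      have wv: "w \<in> vecs 3" unfolding w_def by (rule vecs_comb[OF x'v u0])
      define c0 c1 c2 where "c0 = det3 w p1 p2 / det3 p0 p1 p2" and "c1 = det3 p0 w p2 / det3 p0 p1 p2" and "c2 = det3 p0 p1 w / det3 p0 p1 p2"
      have we: "w = (\<lambda>i. c0 * p0 i + c1 * p1 i + c2 * p2 i)"
        unfolding c0_def c1_def c2_def by (rule cramer[OF dnz wv p0(1) p1(1) p2(1)])
      define Y where "Y = (\<lambda>i. c0 * ext p0 0 i + 1 * ext u0 1 i)"
      have Y0: "Y \<in> L0" unfolding Y_def using cl0[of c0 1] L0e by simp
      have Ynz: "Y \<noteq> zvec" by (rule nz_of_3) (simp add: Y_def)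
      have Ye: "Y = (\<lambda>i. 1 * ext x' 1 i + (- c1) * ext p1 0 i + (- c2) * ext p2 0 i)"
      proof (rule ext)
        fix i
        have "w i = c0 * p0 i + c1 * p1 i + c2 * p2 i" using we by (simp add: fun_eq_iff)
        then show "Y i = 1 * ext x' 1 i + (- c1) * ext p1 0 i + (- c2) * ext p2 0 i"
          by (cases "i = 3") (simp_all add: Y_def ext_def w_def algebra_simps)
      qed
      have "qf 4 c Y = 0" using Y0 on0 by blast
      then have "c1 * c2 * pol 3 c p1 p2 = 0"
        unfolding Ye qf_comb3 using fX bX1 bX2 b12 by simp
      then have "c1 = 0 \<or> c2 = 0" using bnz by simp
      moreover have "c1 = 0 \<Longrightarrow> Y \<in> L2" unfolding Ye using span2_closed3[OF X'2[unfolded L2e] P2[unfolded L2e] P2[unfolded L2e], of 1 0 "- c2"] L2e by simp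
      moreover have "c2 = 0 \<Longrightarrow> Y \<in> L1" unfolding Ye using span2_closed3[OF X'1[unfolded L1e] P1[unfolded L1e] P1[unfolded L1e], of 1 "- c1" 0] L1e by simp
      ultimately show False using in0 Y0 Ynz by blast
    qed
  next
    case True
    have Xe0: "X = ext x 0" using Xe True by simp
    have xnz: "x \<noteq> zvec"
    proof
      assume "x = zvec" then have "X = zvec" using Xe0 by (simp add: ext_def zvec_def fun_eq_iff)
      then show False using Xnz by simp
    qed
    define v where "v = (\<lambda>i. 1 * u1 i + (- 1) * u2 i)"
    have vv: "v \<in> vecs 3" unfolding v_def by (rule vecs_comb[OF u1 u2])
    have indxv: "indep2 x v"
      unfolding indep2_def
    proof (intro allI impI)
      fix a b assume z: "(\<lambda>i. a * x i + b * v i) = zvec"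
      show "a = 0 \<and> b = 0"
      proof (cases "b = 0")
        case True
        then have "(\<lambda>i. a * x i) = zvec" using z by simp
        then show ?thesis using True xnz by (auto simp: zvec_def fun_eq_iff)
      next
        case bnz: False
        have U2e: "ext u2 1 = (\<lambda>i. 1 * ext u1 1 i + (a / b) * X i)"
        proof (rule ext)
          fix i
          have "a * x i + b * v i = 0" using fun_cong[OF z, of i] by (simp add: zvec_def)
          then have vi: "v i = (- a / b) * x i" using bnz by (rule solve_lin)
          have "u2 i = u1 i - v i" by (simp add: v_def)
          also have "\<dots> = u1 i + (a / b) * x i" by (simp add: vi)
          finally show "ext u2 1 i = 1 * ext u1 1 i + (a / b) * X i" by (simp add: Xe0 ext_def)
        qed
        have "ext u2 1 \<in> L1" unfolding U2e using span2_closed[OF U1[unfolded L1e] X1[unfolded L1e], of 1 "a / b"] L1e by simp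
        then have "L1 = L2" using lines_eq[OF L1 L2 X1 _ X2 U2] indep_ext[OF xv xnz, of u2] Xe0 by blast
        then show ?thesis using ne by simp
      qed
    qed
    have fX: "qf 4 c X = 0" "qf 4 c (ext u1 1) = 0" "qf 4 c (ext u2 1) = 0" using X1 U1 U2 on1 on2 by auto
    have bXU1: "pol 4 c X (ext u1 1) = 0" using on_pol[OF X1[unfolded L1e] U1[unfolded L1e] on1'] .
    have bXU2: "pol 4 c X (ext u2 1) = 0" using on_pol[OF X2[unfolded L2e] U2[unfolded L2e] on2'] .
    have bUX1: "pol 4 c (ext u1 1) X = 0" using bXU1 pol_sym by metis
    have bUX2: "pol 4 c (ext u2 1) X = 0" using bXU2 pol_sym by metis
    have bnz: "pol 4 c (ext u1 1) (ext u2 1) \<noteq> 0"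
    proof
      assume b0: "pol 4 c (ext u1 1) (ext u2 1) = 0"
      have "\<forall>a b. qf 4 c (ext (\<lambda>i. a * x i + b * v i) 0) = 0"
      proof (intro allI)
        fix a b
        have e: "ext (\<lambda>i. a * x i + b * v i) 0 = (\<lambda>i. a * X i + b * ext u1 1 i + (- b) * ext u2 1 i)"
          by (simp add: Xe0 ext_def v_def fun_eq_iff algebra_simps)
        show "qf 4 c (ext (\<lambda>i. a * x i + b * v i) 0) = 0"
          unfolding e qf_comb3 using fX bXU1 bXU2 b0 by simp
      qed
      then show False using NSp[OF indxv xv vv] by blast
    qed
    show False
    proof (cases "det3 p0 x v = 0")
      case True
      obtain a0 a1 a2 where aa: "a0 \<noteq> 0 \<or> a1 \<noteq> 0 \<or> a2 \<noteq> 0" and z: "(\<lambda>i. a0 * p0 i + a1 * x i + a2 * v i) = zvec"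
        using det3_zero_dep[OF True p0(1) xv vv] by blast
      have a0: "a0 \<noteq> 0"
      proof
        assume "a0 = 0"
        then have "(\<lambda>i. a1 * x i + a2 * v i) = zvec" using z by simp
        then show False using indxv aa \<open>a0 = 0\<close> unfolding indep2_def by blast
      qed
      define c1 c2 where "c1 = - a1 / a0" and "c2 = - a2 / a0"
      have P0e: "ext p0 0 = (\<lambda>i. c1 * X i + c2 * ext u1 1 i + (- c2) * ext u2 1 i)"
      proof (rule ext)
        fix i
        have "a0 * p0 i + a1 * x i + a2 * v i = 0" using fun_cong[OF z, of i] by (simp add: zvec_def)
        then have "p0 i = c1 * x i + c2 * v i" unfolding c1_def c2_def using a0 by (rule solve_lin3)
        then show "ext p0 0 i = c1 * X i + c2 * ext u1 1 i + (- c2) * ext u2 1 i"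
          by (simp add: ext_def Xe0 v_def algebra_simps)
      qed
      have "qf 4 c (ext p0 0) = 0" using P0 on0 by blast
      then have "c2 * c2 * pol 4 c (ext u1 1) (ext u2 1) = 0"
        unfolding P0e qf_comb3 using fX bXU1 bXU2 by (simp add: algebra_simps)
      then have c2: "c2 = 0" using bnz by simp
      have "ext p0 0 \<noteq> zvec" by (rule ext_nz[OF p0])
      moreover have "ext p0 0 \<in> L1" unfolding P0e c2
        using span2_closed3[OF X1[unfolded L1e] U1[unfolded L1e] U1[unfolded L1e], of c1 0 0] L1e by simp
      ultimately show False using in0 P0 by blast
    next
      case dnz: False
      define w where "w = (\<lambda>i. 1 * u1 i + (- 1) * u0 i)"
      have wv: "w \<in> vecs 3" unfolding w_def by (rule vecs_comb[OF u1 u0])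
      define c0 c1 c2 where "c0 = det3 w x v / det3 p0 x v" and "c1 = det3 p0 w v / det3 p0 x v" and "c2 = det3 p0 x w / det3 p0 x v"
      have we: "w = (\<lambda>i. c0 * p0 i + c1 * x i + c2 * v i)"
        unfolding c0_def c1_def c2_def by (rule cramer[OF dnz wv p0(1) xv vv])
      define Y where "Y = (\<lambda>i. c0 * ext p0 0 i + 1 * ext u0 1 i)"
      have Y0: "Y \<in> L0" unfolding Y_def using cl0[of c0 1] L0e by simp
      have Ynz: "Y \<noteq> zvec" by (rule nz_of_3) (simp add: Y_def)
      have Ye: "Y = (\<lambda>i. (1 - c2) * ext u1 1 i + c2 * ext u2 1 i + (- c1) * X i)"
      proof (rule ext)
        fix i
        have "w i = c0 * p0 i + c1 * x i + c2 * v i" using we by (simp add: fun_eq_iff)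
        then show "Y i = (1 - c2) * ext u1 1 i + c2 * ext u2 1 i + (- c1) * X i"
          by (cases "i = 3") (simp_all add: Y_def ext_def w_def v_def Xe0 algebra_simps)
      qed
      have "qf 4 c Y = 0" using Y0 on0 by blast
      then have "(1 - c2) * c2 * pol 4 c (ext u1 1) (ext u2 1) = 0"
        unfolding Ye qf_comb3 using fX bUX1 bUX2 by simp
      then have "c2 = 0 \<or> c2 = 1" using bnz by auto
      moreover have "c2 = 0 \<Longrightarrow> Y \<in> L1" unfolding Ye
        using span2_closed3[OF U1[unfolded L1e] U1[unfolded L1e] X1[unfolded L1e], of 1 0 "- c1"] L1e by simp
      moreover have "c2 = 1 \<Longrightarrow> Y \<in> L2" unfolding Ye
        using span2_closed3[OF U2[unfolded L2e] U2[unfolded L2e] X2[unfolded L2e], of 0 1 "- c1"] L2e by simp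
      ultimately show False using in0 Y0 Ynz by blast
    qed
  qed
qed

theorem proposition3p9:
  fixes A :: "('a::{finite,field}) matr"
    and \<phi> :: "'a \<Rightarrow> 'b::{finite,field}"
    and c :: "'a matr"
    and R :: "'a vect set set"
  assumes "singer_cycle A"
    and "cubic_ext \<phi>"
    and "in_H \<phi> A c"
    and "qf 4 c pointT \<noteq> 0"
    and "regulus c R"
    and "L1 \<in> R" and "L2 \<in> R" and "L1 \<noteq> L2"
  shows "\<not> same_C_orbit A L1 L2"
proof
  assume orb: "same_C_orbit A L1 L2"
  interpret singer_ext A \<phi> using assms(1,2) by (unfold_locales) auto
  obtain o0 o1 o2 where r: "poly chi o0 = 0" "poly chi o1 = 0" "poly chi o2 = 0" and d: "o0 \<noteq> o1" "o0 \<noteq> o2" "o1 \<noteq> o2"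
    using three_roots by blast
  obtain w0 where w0: "w0 \<in> vecs 3" "w0 \<noteq> zvec" "mat_mul_vec 3 Ab w0 = (\<lambda>i. o0 * w0 i)" using eigvec[OF r(1)] by blast
  obtain w1 where w1: "w1 \<in> vecs 3" "w1 \<noteq> zvec" "mat_mul_vec 3 Ab w1 = (\<lambda>i. o1 * w1 i)" using eigvec[OF r(2)] by blast
  obtain w2 where w2: "w2 \<in> vecs 3" "w2 \<noteq> zvec" "mat_mul_vec 3 Ab w2 = (\<lambda>i. o2 * w2 i)" using eigvec[OF r(3)] by blast
  have bund: "in_bundle \<phi> A c" and nd: "nondeg 3 c" using assms(3) by (simp_all add: in_H_def in_bundle_def)
  have b0: "qf 3 (\<lambda>i j. \<phi> (c i j)) w0 = 0" using bund in_delta[OF w0] by (simp add: in_bundle_def)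
  have b1: "qf 3 (\<lambda>i j. \<phi> (c i j)) w1 = 0" using bund in_delta[OF w1] by (simp add: in_bundle_def)
  have b2: "qf 3 (\<lambda>i j. \<phi> (c i j)) w2 = 0" using bund in_delta[OF w2] by (simp add: in_bundle_def)
  interpret eigs A \<phi> c o0 o1 o2 w0 w1 w2
    using d w0 w1 w2 b0 b1 b2 by unfold_locales auto
  have a: "c 3 3 \<noteq> 0" using assms(4) by (simp add: qf4_explicit pointT_def)
  obtain k where L2e: "L2 = mat_mul_vec 4 (blk (mat_pow 3 A k)) ` L1" using orb by (auto simp: same_C_orbit_def)
  obtain L0 where L0: "line_on c L0" and Re: "R = {L. line_on c L \<and> (L = L0 \<or> L \<inter> L0 = {zvec})}"
    using assms(5) by (auto simp: regulus_def)
  have l1: "line_on c L1" "L1 = L0 \<or> L1 \<inter> L0 = {zvec}" using assms(6) Re by auto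
  have l2: "line_on c L2" "L2 = L0 \<or> L2 \<inter> L0 = {zvec}" using assms(7) Re by auto
  have L1l: "L1 \<in> lines4" and on1: "\<forall>v\<in>L1. qf 4 c v = 0" using l1(1) by (auto simp: line_on_def)
  have L2l: "L2 \<in> lines4" and on2: "\<forall>v\<in>L2. qf 4 c v = 0" using l2(1) by (auto simp: line_on_def)
  have L0l: "L0 \<in> lines4" and on0: "\<forall>v\<in>L0. qf 4 c v = 0" using L0 by (auto simp: line_on_def)
  obtain X where X: "X \<noteq> zvec" "X \<in> L1" "X \<in> L2"
    using main_meet[OF nd a L1l on1, of k] on2 L2e by blast
  show False
  proof (cases "L1 = L0")
    case True
    then have "L2 \<inter> L0 = {zvec}" using l2(2) assms(8) by auto
    then show False using X True by blast
  next
    case n1: False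
    show False
    proof (cases "L2 = L0")
      case True
      then have "L1 \<inter> L0 = {zvec}" using l1(2) assms(8) by auto
      then show False using X True by blast
    next
      case n2: False
      have s1: "L0 \<inter> L1 = {zvec}" using l1(2) n1 by auto
      have s2: "L0 \<inter> L2 = {zvec}" using l2(2) n2 by auto
      show False by (rule RC[OF nd L0l L1l L2l on0 on1 on2 assms(8) X s1 s2])
    qed
  qed
qed

end
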